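(* Let $r,t\ge 2$ be integers and let $n\ge rt$. Suppose that $G$ is an $n$-vertex complete multipartite graph satisfying $I(K_r(t),G)=I(K_r(t),n)$. Then $G\cong T_k(n)$ for some integer $k\ge r$. In particular, for every integer $n\ge rt$ there exists an integer $k$ such that $I(K_r(t),T_k(n))=I(K_r(t),n)$.
   Context: $K_r(t)$ denotes the complete $r$-partite graph with every part of size $t$. For graphs $F,G$, $I(F,G)$ is the number of subsets $S\subseteq V(G)$ with $|S|=v(F)$ such that $G[S]\cong F$, and $I(F,n)=\max\{I(F,G):v(G)=n\}$. The Turán graph $T_k(n)$ is the complete $k$-partite graph on $n$ vertices whose part sizes differ by at most one. *)

theory Defs
  imports Main
begin

definition simple_graph :: "'a set \<Rightarrow> ('a \<Rightarrow> 'a \<Rightarrow> bool) \<Rightarrow> bool" where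
  "simple_graph V E \<longleftrightarrow> finite V \<and> (\<forall>x y. E x y \<longrightarrow> x \<in> V \<and> y \<in> V)
     \<and> (\<forall>x y. E x y \<longrightarrow> E y x) \<and> (\<forall>x. \<not> E x x)"

definition graph_iso :: "'a set \<Rightarrow> ('a \<Rightarrow> 'a \<Rightarrow> bool) \<Rightarrow> 'b set \<Rightarrow> ('b \<Rightarrow> 'b \<Rightarrow> bool) \<Rightarrow> bool" where
  "graph_iso V E W F \<longleftrightarrow> (\<exists>f. bij_betw f V W \<and> (\<forall>x\<in>V. \<forall>y\<in>V. E x y \<longleftrightarrow> F (f x) (f y)))"

definition induced :: "('a \<Rightarrow> 'a \<Rightarrow> bool) \<Rightarrow> 'a set \<Rightarrow> 'a \<Rightarrow> 'a \<Rightarrow> bool" where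
  "induced E S = (\<lambda>x y. E x y \<and> x \<in> S \<and> y \<in> S)"

definition ind_count :: "'b set \<Rightarrow> ('b \<Rightarrow> 'b \<Rightarrow> bool) \<Rightarrow> 'a set \<Rightarrow> ('a \<Rightarrow> 'a \<Rightarrow> bool) \<Rightarrow> nat" where
  "ind_count VF EF V E = card {S. S \<subseteq> V \<and> card S = card VF \<and> graph_iso S (induced E S) VF EF}"

text \<open>I(F,n): maximum over all n-vertex graphs (up to isomorphism these are the
graphs on vertex set {0..<n}).\<close>
definition ind_max :: "'b set \<Rightarrow> ('b \<Rightarrow> 'b \<Rightarrow> bool) \<Rightarrow> nat \<Rightarrow> nat" where
  "ind_max VF EF n = Max {ind_count VF EF {0..<n} E | E. simple_graph {0..<n::nat} E}"

definition complete_multipartite :: "'a set \<Rightarrow> ('a \<Rightarrow> 'a \<Rightarrow> bool) \<Rightarrow> bool" where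
  "complete_multipartite V E \<longleftrightarrow> (\<exists>p :: 'a \<Rightarrow> nat. \<forall>x\<in>V. \<forall>y\<in>V. E x y \<longleftrightarrow> p x \<noteq> p y)"

definition Kpart_V :: "nat \<Rightarrow> nat \<Rightarrow> (nat \<times> nat) set" where
  "Kpart_V r t = {0..<r} \<times> {0..<t}"

definition Kpart_E :: "nat \<Rightarrow> nat \<Rightarrow> nat \<times> nat \<Rightarrow> nat \<times> nat \<Rightarrow> bool" where
  "Kpart_E r t = (\<lambda>u v. u \<in> Kpart_V r t \<and> v \<in> Kpart_V r t \<and> fst u \<noteq> fst v)"

text \<open>Turan graph T_k(n) on {0..<n}: parts are residue classes mod k (sizes differ by at most one).\<close>
definition turan_E :: "nat \<Rightarrow> nat \<Rightarrow> nat \<Rightarrow> nat \<Rightarrow> bool" where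
  "turan_E k n = (\<lambda>x y. x < n \<and> y < n \<and> x mod k \<noteq> y mod k)"

end

theory Submission
  imports Defs Complex_Main
begin

lemma graph_iso_sym:
  assumes "graph_iso V E W F" shows "graph_iso W F V E"
proof -
  from assms obtain f where b: "bij_betw f V W" and e: "\<forall>x\<in>V. \<forall>y\<in>V. E x y \<longleftrightarrow> F (f x) (f y)"
    unfolding graph_iso_def by blast
  let ?g = "inv_into V f"
  have bg: "bij_betw ?g W V" using b by (rule bij_betw_inv_into)
  have "\<forall>x\<in>W. \<forall>y\<in>W. F x y \<longleftrightarrow> E (?g x) (?g y)"
  proof (intro ballI)
    fix x y assume x: "x \<in> W" and y: "y \<in> W"
    have "?g x \<in> V" "?g y \<in> V" using bg x y by (auto simp: bij_betw_def)
    moreover have "f (?g x) = x" "f (?g y) = y" using b x y by (auto simp: bij_betw_inv_into_right)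
    ultimately show "F x y \<longleftrightarrow> E (?g x) (?g y)" using e by metis
  qed
  then show ?thesis using bg unfolding graph_iso_def by blast
qed

lemma graph_iso_trans:
  assumes "graph_iso U D V E" "graph_iso V E W F" shows "graph_iso U D W F"
proof -
  from assms(1) obtain f where b: "bij_betw f U V" and e: "\<forall>x\<in>U. \<forall>y\<in>U. D x y \<longleftrightarrow> E (f x) (f y)"
    unfolding graph_iso_def by blast
  from assms(2) obtain g where b2: "bij_betw g V W" and e2: "\<forall>x\<in>V. \<forall>y\<in>V. E x y \<longleftrightarrow> F (g x) (g y)"
    unfolding graph_iso_def by blast
  have "bij_betw (g \<circ> f) U W" using b b2 by (rule bij_betw_trans)
  moreover have "\<forall>x\<in>U. \<forall>y\<in>U. D x y \<longleftrightarrow> F ((g \<circ> f) x) ((g \<circ> f) y)"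
    using e e2 b by (auto simp: bij_betw_def)
  ultimately show ?thesis unfolding graph_iso_def by blast
qed

lemma graph_iso_card: "graph_iso V E W F \<Longrightarrow> card V = card W"
  unfolding graph_iso_def using bij_betw_same_card by blast

lemma graph_iso_induced_image:
  assumes b: "bij_betw g V W" and e: "\<forall>x\<in>V. \<forall>y\<in>V. E x y \<longleftrightarrow> F (g x) (g y)" and S: "S \<subseteq> V"
  shows "graph_iso S (induced E S) (g ` S) (induced F (g ` S))"
proof -
  have "bij_betw g S (g ` S)" using b S by (meson bij_betw_def inj_on_subset)
  moreover have "\<forall>x\<in>S. \<forall>y\<in>S. induced E S x y \<longleftrightarrow> induced F (g ` S) (g x) (g y)"
    using e S by (auto simp: induced_def)
  ultimately show ?thesis unfolding graph_iso_def by blast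
qed

lemma ind_count_bij:
  assumes b: "bij_betw g V W" and e: "\<forall>x\<in>V. \<forall>y\<in>V. E x y \<longleftrightarrow> F (g x) (g y)"
  shows "ind_count VF EF V E = ind_count VF EF W F"
proof -
  let ?A = "{S. S \<subseteq> V \<and> card S = card VF \<and> graph_iso S (induced E S) VF EF}"
  let ?B = "{S. S \<subseteq> W \<and> card S = card VF \<and> graph_iso S (induced F S) VF EF}"
  have inj: "inj_on g V" using b by (auto simp: bij_betw_def)
  have "inj_on ((`) g) ?A"
    by (rule inj_on_subset[OF inj_on_image_Pow[OF inj]]) auto
  moreover have "(`) g ` ?A = ?B"
  proof
    show "(`) g ` ?A \<subseteq> ?B"
    proof
      fix T assume "T \<in> (`) g ` ?A"
      then obtain S where S: "S \<in> ?A" and T: "T = g ` S" by blast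
      have SV: "S \<subseteq> V" using S by blast
      have i: "graph_iso S (induced E S) (g ` S) (induced F (g ` S))"
        using graph_iso_induced_image[OF b e SV] .
      have "graph_iso (g ` S) (induced F (g ` S)) VF EF"
        using graph_iso_trans[OF graph_iso_sym[OF i]] S by blast
      moreover have "card (g ` S) = card S" using inj_on_subset[OF inj SV] by (rule card_image)
      moreover have "g ` S \<subseteq> W" using b SV by (auto simp: bij_betw_def)
      ultimately show "T \<in> ?B" using S unfolding T by simp
    qed
  next
    show "?B \<subseteq> (`) g ` ?A"
    proof
      fix T assume T: "T \<in> ?B"
      then have "T \<subseteq> g ` V" using b by (auto simp: bij_betw_def)
      then obtain S where SV: "S \<subseteq> V" and TS: "T = g ` S" unfolding subset_image_iff by blast
      have i: "graph_iso S (induced E S) (g ` S) (induced F (g ` S))"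
        using graph_iso_induced_image[OF b e SV] .
      have "graph_iso S (induced E S) VF EF" using graph_iso_trans[OF i] T TS by blast
      moreover have "card (g ` S) = card S" using inj_on_subset[OF inj SV] by (rule card_image)
      ultimately have "S \<in> ?A" using SV TS T by simp
      then show "T \<in> (`) g ` ?A" using TS by blast
    qed
  qed
  ultimately have "card ?B = card ?A" using card_image by fastforce
  then show ?thesis unfolding ind_count_def by simp
qed

lemma ind_count_iso:
  "graph_iso V E W F \<Longrightarrow> ind_count VF EF V E = ind_count VF EF W F"
  unfolding graph_iso_def using ind_count_bij by blast

lemma ind_count_le_pow:
  assumes "finite V" shows "ind_count VF EF V E \<le> card (Pow V)"
  unfolding ind_count_def by (rule card_mono) (use assms in auto)

lemma ind_max_finite:
  "finite {ind_count VF EF {0..<n} E | E. simple_graph {0..<n::nat} E}"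
proof -
  have "{ind_count VF EF {0..<n} E | E. simple_graph {0..<n::nat} E} \<subseteq> {..card (Pow {0..<n::nat})}"
    using ind_count_le_pow[of "{0..<n::nat}"] by auto
  then show ?thesis using finite_subset by blast
qed

lemma simple_graph_empty: "finite V \<Longrightarrow> simple_graph V (\<lambda>_ _. False)"
  unfolding simple_graph_def by auto

lemma ind_max_ge:
  assumes "simple_graph {0..<n::nat} E"
  shows "ind_count VF EF {0..<n} E \<le> ind_max VF EF n"
  unfolding ind_max_def by (rule Max_ge[OF ind_max_finite]) (use assms in blast)

lemma ind_max_attained:
  "\<exists>E. simple_graph {0..<n::nat} E \<and> ind_count VF EF {0..<n} E = ind_max VF EF n"
proof -
  have ne: "{ind_count VF EF {0..<n} E | E. simple_graph {0..<n::nat} E} \<noteq> {}"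
    using simple_graph_empty[of "{0..<n::nat}"] by auto
  show ?thesis using Max_in[OF ind_max_finite ne] unfolding ind_max_def by auto
qed

lemma transfer_graph:
  assumes sg: "simple_graph V E" and cV: "card V = n"
  shows "\<exists>E'. simple_graph {0..<n} E' \<and> graph_iso V E {0..<n} E'"
proof -
  have fV: "finite V" using sg by (simp add: simple_graph_def)
  obtain g where b: "bij_betw g V {0..<n}" using finite_same_card_bij[OF fV, of "{0..<n}"] cV by auto
  let ?h = "inv_into V g"
  define E' where "E' = (\<lambda>x y. x < n \<and> y < n \<and> E (?h x) (?h y))"
  have bh: "bij_betw ?h {0..<n} V" using b by (rule bij_betw_inv_into)
  have "simple_graph {0..<n} E'"
    using sg unfolding simple_graph_def E'_def by simp
  moreover have "\<forall>x\<in>V. \<forall>y\<in>V. E x y \<longleftrightarrow> E' (g x) (g y)"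
  proof (intro ballI)
    fix x y assume "x \<in> V" "y \<in> V"
    moreover have "inj_on g V" using b by (simp add: bij_betw_def)
    moreover have "g x < n" "g y < n" using b \<open>x \<in> V\<close> \<open>y \<in> V\<close> by (auto dest: bij_betwE)
    ultimately show "E x y \<longleftrightarrow> E' (g x) (g y)" unfolding E'_def by (simp add: inv_into_f_f)
  qed
  ultimately show ?thesis using b unfolding graph_iso_def by blast
qed

lemma ind_count_le_max:
  assumes sg: "simple_graph V E" and cV: "card V = n"
  shows "ind_count VF EF V E \<le> ind_max VF EF n"
proof -
  obtain E' where "simple_graph {0..<n} E'" "graph_iso V E {0..<n} E'"
    using transfer_graph[OF sg cV] by blast
  then show ?thesis using ind_count_iso ind_max_ge by metis
qed

definition famc :: "'b set \<Rightarrow> ('b \<Rightarrow> 'b \<Rightarrow> bool) \<Rightarrow> 'a set \<Rightarrow> ('a \<Rightarrow> 'a \<Rightarrow> bool) \<Rightarrow> 'a set set" where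
  "famc VF EF V E = {S. S \<subseteq> V \<and> card S = card VF \<and> graph_iso S (induced E S) VF EF}"

lemma ind_count_famc: "ind_count VF EF V E = card (famc VF EF V E)"
  unfolding ind_count_def famc_def ..

lemma finite_famc: "finite V \<Longrightarrow> finite (famc VF EF V E)"
  unfolding famc_def by (rule finite_subset[of _ "Pow V"]) auto

definition twinF :: "'b set \<Rightarrow> ('b \<Rightarrow> 'b \<Rightarrow> bool) \<Rightarrow> bool" where
  "twinF VF EF \<longleftrightarrow> (\<forall>a\<in>VF. \<forall>b\<in>VF. \<forall>c\<in>VF. \<not> EF a b \<longrightarrow> (EF a c \<longleftrightarrow> EF b c))"

definition gclone :: "('a \<Rightarrow> 'a \<Rightarrow> bool) \<Rightarrow> 'a \<Rightarrow> 'a set \<Rightarrow> 'a \<Rightarrow> 'a \<Rightarrow> bool" where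
  "gclone E u A = (\<lambda>x y. E (if x \<in> A then u else x) (if y \<in> A then u else y))"

lemma split_card: "finite A \<Longrightarrow> card A = card {x\<in>A. P x} + card {x\<in>A. \<not> P x}"
proof -
  assume f: "finite A"
  have "A = {x\<in>A. P x} \<union> {x\<in>A. \<not> P x}" by blast
  moreover have "card ({x\<in>A. P x} \<union> {x\<in>A. \<not> P x}) = card {x\<in>A. P x} + card {x\<in>A. \<not> P x}"
    by (rule card_Un_disjoint) (use f in auto)
  ultimately show ?thesis by simp
qed

lemma simple_gclone:
  assumes "simple_graph V E" "u \<in> V" "A \<subseteq> V"
  shows "simple_graph V (gclone E u A)"
proof -
  have m: "\<And>x. (if x \<in> A then u else x) \<in> V \<Longrightarrow> x \<in> V" using assms(3) by (auto split: if_splits)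
  show ?thesis using assms(1) m unfolding simple_graph_def gclone_def by blast
qed

lemma induced_gclone_out:
  assumes "S \<inter> A = {}"
  shows "induced (gclone E u A) S = induced E S"
  using assms unfolding induced_def gclone_def by (intro ext) auto

lemma four_split:
  assumes "finite X"
  shows "card X = card {S\<in>X. u \<notin> S \<and> v \<notin> S} + card {S\<in>X. u \<in> S \<and> v \<notin> S}
     + card {S\<in>X. u \<notin> S \<and> v \<in> S} + card {S\<in>X. u \<in> S \<and> v \<in> S}"
proof -
  have f1: "finite {S\<in>X. u \<in> S}" "finite {S\<in>X. u \<notin> S}" using assms by auto
  have "card X = card {S\<in>X. u \<in> S} + card {S\<in>X. u \<notin> S}" using split_card[OF assms] .
  moreover have "card {S\<in>X. u \<in> S} = card {S\<in>{S\<in>X. u \<in> S}. v \<in> S} + card {S\<in>{S\<in>X. u \<in> S}. v \<notin> S}"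
    using split_card[OF f1(1)] .
  moreover have "card {S\<in>X. u \<notin> S} = card {S\<in>{S\<in>X. u \<notin> S}. v \<in> S} + card {S\<in>{S\<in>X. u \<notin> S}. v \<notin> S}"
    using split_card[OF f1(2)] .
  moreover have "{S\<in>{S\<in>X. u \<in> S}. v \<in> S} = {S\<in>X. u \<in> S \<and> v \<in> S}"
    "{S\<in>{S\<in>X. u \<in> S}. v \<notin> S} = {S\<in>X. u \<in> S \<and> v \<notin> S}"
    "{S\<in>{S\<in>X. u \<notin> S}. v \<in> S} = {S\<in>X. u \<notin> S \<and> v \<in> S}"
    "{S\<in>{S\<in>X. u \<notin> S}. v \<notin> S} = {S\<in>X. u \<notin> S \<and> v \<notin> S}" by auto
  ultimately show ?thesis by simp
qed

lemma clone_lower: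
  assumes fV: "finite V" and tw: "twinF VF EF"
    and u: "u \<in> V" and v: "v \<in> V" and uv: "u \<noteq> v" and nE: "\<not> E u v" and sym: "\<And>x y. E x y \<Longrightarrow> E y x" and irr: "\<And>x. \<not> E x x"
  shows "card {S\<in>famc VF EF V E. u \<notin> S \<and> v \<notin> S} + 2 * card {S\<in>famc VF EF V E. u \<in> S \<and> v \<notin> S}
       + card {S\<in>famc VF EF V E. u \<in> S \<and> v \<in> S} \<le> ind_count VF EF V (gclone E u {v})"
proof -
  let ?E' = "gclone E u {v}"
  let ?X = "famc VF EF V E" and ?Y = "famc VF EF V ?E'"
  let ?\<sigma> = "\<lambda>x. if x \<in> {v} then u else x"
  have e1: "{S\<in>?Y. u \<notin> S \<and> v \<notin> S} = {S\<in>?X. u \<notin> S \<and> v \<notin> S}"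
    unfolding famc_def using induced_gclone_out[of _ "{v}" E u] by auto
  have e2: "{S\<in>?Y. u \<in> S \<and> v \<notin> S} = {S\<in>?X. u \<in> S \<and> v \<notin> S}"
    unfolding famc_def using induced_gclone_out[of _ "{v}" E u] by auto
  have e4: "{S\<in>?X. u \<in> S \<and> v \<in> S} \<subseteq> {S\<in>?Y. u \<in> S \<and> v \<in> S}"
  proof
    fix S assume S: "S \<in> {S\<in>?X. u \<in> S \<and> v \<in> S}"
    then obtain f where bf: "bij_betw f S VF" and ef: "\<forall>x\<in>S. \<forall>y\<in>S. induced E S x y \<longleftrightarrow> EF (f x) (f y)"
      unfolding famc_def graph_iso_def by blast
    have uS: "u \<in> S" and vS: "v \<in> S" using S by auto
    have fS: "\<And>x. x \<in> S \<Longrightarrow> f x \<in> VF" using bf by (auto dest: bij_betwE)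
    have nf: "\<not> EF (f u) (f v)" using ef uS vS nE unfolding induced_def by auto
    have twin: "\<And>w. w \<in> S \<Longrightarrow> E u w \<longleftrightarrow> E v w"
    proof -
      fix w assume wS: "w \<in> S"
      have "E u w \<longleftrightarrow> EF (f u) (f w)" using ef uS wS unfolding induced_def by auto
      also have "\<dots> \<longleftrightarrow> EF (f v) (f w)" using tw nf fS uS vS wS unfolding twinF_def by blast
      also have "\<dots> \<longleftrightarrow> E v w" using ef vS wS unfolding induced_def by auto
      finally show "E u w \<longleftrightarrow> E v w" .
    qed
    have "induced ?E' S = induced E S"
    proof (intro ext)
      fix x y
      show "induced ?E' S x y = induced E S x y"
      proof (cases "x = v")
        case True
        then show ?thesis
        proof (cases "y = v")
          case True
          then show ?thesis using \<open>x = v\<close> irr unfolding induced_def gclone_def by simp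
        next
          case False
          then show ?thesis using \<open>x = v\<close> twin[of y] unfolding induced_def gclone_def by auto
        qed
      next
        case False
        then show ?thesis
        proof (cases "y = v")
          case True
          then show ?thesis using \<open>x \<noteq> v\<close> twin[of x] sym unfolding induced_def gclone_def by auto
        next
          case False
          then show ?thesis using \<open>x \<noteq> v\<close> unfolding induced_def gclone_def by simp
        qed
      qed
    qed
    then show "S \<in> {S\<in>?Y. u \<in> S \<and> v \<in> S}" using S unfolding famc_def by auto
  qed
  have e3: "card {S\<in>?Y. u \<notin> S \<and> v \<in> S} = card {S\<in>?X. u \<in> S \<and> v \<notin> S}"
  proof -
    have injs: "inj_on ?\<sigma> (- {u})" unfolding inj_on_def by auto
    have inj: "inj_on ((`) ?\<sigma>) {S\<in>?Y. u \<notin> S \<and> v \<in> S}"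
      by (rule inj_on_subset[OF inj_on_image_Pow[OF injs]]) auto
    have key: "\<And>S. S \<subseteq> V \<Longrightarrow> u \<notin> S \<Longrightarrow> v \<in> S \<Longrightarrow> (S \<in> ?Y \<longleftrightarrow> ?\<sigma> ` S \<in> ?X)"
    proof -
      fix S assume SV: "S \<subseteq> V" and uS: "u \<notin> S" and vS: "v \<in> S"
      have injS: "inj_on ?\<sigma> S" using inj_on_subset[OF injs] uS by auto
      have bS: "bij_betw ?\<sigma> S (?\<sigma> ` S)" using injS by (simp add: bij_betw_def)
      have "\<forall>x\<in>S. \<forall>y\<in>S. induced ?E' S x y \<longleftrightarrow> induced E (?\<sigma> ` S) (?\<sigma> x) (?\<sigma> y)"
        unfolding induced_def gclone_def by auto
      then have iso: "graph_iso S (induced ?E' S) (?\<sigma> ` S) (induced E (?\<sigma> ` S))"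
        using bS unfolding graph_iso_def by blast
      have c: "card (?\<sigma> ` S) = card S" using card_image[OF injS] .
      have sV: "?\<sigma> ` S \<subseteq> V" using SV u by auto
      show "S \<in> ?Y \<longleftrightarrow> ?\<sigma> ` S \<in> ?X"
        unfolding famc_def using SV sV c graph_iso_trans[OF iso] graph_iso_trans[OF graph_iso_sym[OF iso]]
        by auto
    qed
    have img: "(`) ?\<sigma> ` {S\<in>?Y. u \<notin> S \<and> v \<in> S} = {S\<in>?X. u \<in> S \<and> v \<notin> S}"
    proof
      show "(`) ?\<sigma> ` {S\<in>?Y. u \<notin> S \<and> v \<in> S} \<subseteq> {S\<in>?X. u \<in> S \<and> v \<notin> S}"
      proof
        fix T assume "T \<in> (`) ?\<sigma> ` {S\<in>?Y. u \<notin> S \<and> v \<in> S}"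
        then obtain S where S: "S \<in> ?Y" "u \<notin> S" "v \<in> S" and T: "T = ?\<sigma> ` S" by blast
        have SV: "S \<subseteq> V" using S unfolding famc_def by auto
        have "T \<in> ?X" using key[OF SV S(2,3)] S T by simp
        moreover have "u \<in> T" "v \<notin> T" using T S(2,3) uv by auto
        ultimately show "T \<in> {S\<in>?X. u \<in> S \<and> v \<notin> S}" by simp
      qed
    next
      show "{S\<in>?X. u \<in> S \<and> v \<notin> S} \<subseteq> (`) ?\<sigma> ` {S\<in>?Y. u \<notin> S \<and> v \<in> S}"
      proof
        fix T assume T: "T \<in> {S\<in>?X. u \<in> S \<and> v \<notin> S}"
        let ?S = "insert v (T - {u})"
        have TV: "T \<subseteq> V" using T unfolding famc_def by auto
        have SV: "?S \<subseteq> V" using TV v by auto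
        have eq: "?\<sigma> ` ?S = T" using T uv by auto
        have "?S \<in> ?Y" using key[OF SV] eq T uv by auto
        then show "T \<in> (`) ?\<sigma> ` {S\<in>?Y. u \<notin> S \<and> v \<in> S}" using eq uv by blast
      qed
    qed
    show ?thesis using card_image[OF inj] img by simp
  qed
  have fY: "finite ?Y" using finite_famc[OF fV] .
  have "card {S\<in>?X. u \<in> S \<and> v \<in> S} \<le> card {S\<in>?Y. u \<in> S \<and> v \<in> S}"
    by (rule card_mono[OF _ e4]) (use fY in auto)
  moreover have "ind_count VF EF V ?E' = card {S\<in>?Y. u \<notin> S \<and> v \<notin> S} + card {S\<in>?Y. u \<in> S \<and> v \<notin> S}
     + card {S\<in>?Y. u \<notin> S \<and> v \<in> S} + card {S\<in>?Y. u \<in> S \<and> v \<in> S}"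
    unfolding ind_count_famc using four_split[OF fY] .
  ultimately show ?thesis using e1 e2 e3 by simp
qed

definition maxg :: "'b set \<Rightarrow> ('b \<Rightarrow> 'b \<Rightarrow> bool) \<Rightarrow> 'a set \<Rightarrow> ('a \<Rightarrow> 'a \<Rightarrow> bool) \<Rightarrow> bool" where
  "maxg VF EF V E \<longleftrightarrow> simple_graph V E \<and> (\<forall>E'. simple_graph V E' \<longrightarrow> ind_count VF EF V E' \<le> ind_count VF EF V E)"

lemma clone_max:
  assumes tw: "twinF VF EF" and mx: "maxg VF EF V E"
    and u: "u \<in> V" and v: "v \<in> V" and uv: "u \<noteq> v" and nE: "\<not> E u v"
  shows "maxg VF EF V (gclone E u {v})"
proof -
  have sg: "simple_graph V E" using mx unfolding maxg_def by blast
  have fV: "finite V" using sg unfolding simple_graph_def by blast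
  have sym: "\<And>x y. E x y \<Longrightarrow> E y x" and irr: "\<And>x. \<not> E x x" using sg unfolding simple_graph_def by blast+
  have nE': "\<not> E v u" using nE sym by blast
  let ?X = "famc VF EF V E"
  have fX: "finite ?X" using finite_famc[OF fV] .
  have l1: "card {S\<in>?X. u \<notin> S \<and> v \<notin> S} + 2 * card {S\<in>?X. u \<in> S \<and> v \<notin> S}
       + card {S\<in>?X. u \<in> S \<and> v \<in> S} \<le> ind_count VF EF V (gclone E u {v})"
    using clone_lower[OF fV tw u v uv nE sym irr] .
  have l2: "card {S\<in>?X. v \<notin> S \<and> u \<notin> S} + 2 * card {S\<in>?X. v \<in> S \<and> u \<notin> S}
       + card {S\<in>?X. v \<in> S \<and> u \<in> S} \<le> ind_count VF EF V (gclone E v {u})"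
    using clone_lower[OF fV tw v u uv[symmetric] nE' sym irr] .
  have q1: "{S\<in>?X. v \<notin> S \<and> u \<notin> S} = {S\<in>?X. u \<notin> S \<and> v \<notin> S}"
    "{S\<in>?X. v \<in> S \<and> u \<notin> S} = {S\<in>?X. u \<notin> S \<and> v \<in> S}"
    "{S\<in>?X. v \<in> S \<and> u \<in> S} = {S\<in>?X. u \<in> S \<and> v \<in> S}" by auto
  have s1: "simple_graph V (gclone E u {v})" using simple_gclone[OF sg u] v by simp
  have s2: "simple_graph V (gclone E v {u})" using simple_gclone[OF sg v] u by simp
  have c1: "ind_count VF EF V (gclone E u {v}) \<le> ind_count VF EF V E" using mx s1 unfolding maxg_def by blast
  have c2: "ind_count VF EF V (gclone E v {u}) \<le> ind_count VF EF V E" using mx s2 unfolding maxg_def by blast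
  have fs: "ind_count VF EF V E = card {S\<in>?X. u \<notin> S \<and> v \<notin> S} + card {S\<in>?X. u \<in> S \<and> v \<notin> S}
     + card {S\<in>?X. u \<notin> S \<and> v \<in> S} + card {S\<in>?X. u \<in> S \<and> v \<in> S}"
    unfolding ind_count_famc using four_split[OF fX] .
  have "ind_count VF EF V (gclone E u {v}) = ind_count VF EF V E"
    using l1 l2 c1 c2 fs unfolding q1 by linarith
  then show ?thesis using mx s1 unfolding maxg_def by simp
qed

lemma gclone_insert:
  assumes "u \<notin> A" "a \<notin> A"
  shows "gclone (gclone E u A) u {a} = gclone E u (insert a A)"
  using assms unfolding gclone_def by (intro ext) auto

lemma multi_clone_max:
  assumes tw: "twinF VF EF" and fA: "finite A"
  shows "maxg VF EF V E \<Longrightarrow> u \<in> V \<Longrightarrow> A \<subseteq> V - {u} \<Longrightarrow> (\<forall>a\<in>A. \<not> E u a) \<Longrightarrow> maxg VF EF V (gclone E u A)"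
  using fA
proof (induction A rule: finite_induct)
  case empty
  have "gclone E u {} = E" unfolding gclone_def by simp
  then show ?case using empty by simp
next
  case (insert a A)
  have m: "maxg VF EF V (gclone E u A)" using insert by auto
  have "\<not> gclone E u A u a" using insert unfolding gclone_def by auto
  then have "maxg VF EF V (gclone (gclone E u A) u {a})"
    using clone_max[OF tw m] insert by auto
  have "u \<notin> A" using insert.prems(3) by auto
  then show ?case using gclone_insert[of u A a E] insert(2) \<open>maxg VF EF V (gclone (gclone E u A) u {a})\<close> by simp
qed

lemma sym_step:
  assumes tw: "twinF VF EF"
  shows "\<forall>E D p. maxg VF EF V E \<and> D \<subseteq> V \<and> card (V - D) = m \<and> (\<forall>x\<in>D. \<forall>y\<in>V - D. E x y)
      \<and> (\<forall>x\<in>D. \<forall>y\<in>D. E x y \<longleftrightarrow> p x \<noteq> (p y :: nat))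
      \<longrightarrow> (\<exists>E'. maxg VF EF V E' \<and> complete_multipartite V E')"
proof (induction m rule: less_induct)
  case (less m)
  show ?case
  proof (intro allI impI)
    fix E D p
    assume H: "maxg VF EF V E \<and> D \<subseteq> V \<and> card (V - D) = m \<and> (\<forall>x\<in>D. \<forall>y\<in>V - D. E x y)
      \<and> (\<forall>x\<in>D. \<forall>y\<in>D. E x y \<longleftrightarrow> p x \<noteq> (p y :: nat))"
    have mx: "maxg VF EF V E" and DV: "D \<subseteq> V" and cm: "card (V - D) = m"
      and out: "\<forall>x\<in>D. \<forall>y\<in>V - D. E x y" and inn: "\<forall>x\<in>D. \<forall>y\<in>D. E x y \<longleftrightarrow> p x \<noteq> p y"
      using H by blast+
    have sg: "simple_graph V E" using mx unfolding maxg_def by blast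
    have fV: "finite V" using sg unfolding simple_graph_def by blast
    have sym: "\<And>x y. E x y \<Longrightarrow> E y x" and irr: "\<And>x. \<not> E x x" using sg unfolding simple_graph_def by blast+
    show "\<exists>E'. maxg VF EF V E' \<and> complete_multipartite V E'"
    proof (cases "D = V")
      case True
      then have "\<forall>x\<in>V. \<forall>y\<in>V. E x y \<longleftrightarrow> p x \<noteq> p y" using inn by simp
      then have "complete_multipartite V E" unfolding complete_multipartite_def by (rule exI[where x=p])
      then show ?thesis using mx by blast
    next
      case False
      then obtain u where u: "u \<in> V" "u \<notin> D" using DV by blast
      define A where "A = {a\<in>V - D. a \<noteq> u \<and> \<not> E u a}"
      have fA: "finite A" unfolding A_def using fV by simp
      have AV: "A \<subseteq> V - {u}" unfolding A_def by auto
      define E' where "E' = gclone E u A"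
      have mx': "maxg VF EF V E'" unfolding E'_def
        by (rule multi_clone_max[OF tw fA mx u(1) AV]) (auto simp: A_def)
      have fpD: "finite (p ` D)" using finite_subset[OF DV fV] by simp
      obtain c :: nat where c: "c \<notin> p ` D"
        using ex_new_if_finite[OF infinite_UNIV_nat fpD] by blast
      define D' where "D' = D \<union> insert u A"
      define p' where "p' = (\<lambda>x. if x \<in> insert u A then c else p x)"
      have D'V: "D' \<subseteq> V" unfolding D'_def A_def using DV u by auto
      have lt: "card (V - D') < m"
      proof -
        have "V - D' \<subset> V - D" unfolding D'_def using u by auto
        moreover have "finite (V - D)" using fV by simp
        ultimately show ?thesis using cm psubset_card_mono by blast
      qed
      have ev: "\<And>x y. E' x y = E (if x \<in> A then u else x) (if y \<in> A then u else y)"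
        unfolding E'_def gclone_def by simp
      have DA: "D \<inter> A = {}" unfolding A_def by auto
      have uA: "u \<notin> A" unfolding A_def by auto
      have out': "\<forall>x\<in>D'. \<forall>y\<in>V - D'. E' x y"
      proof (intro ballI)
        fix x y assume x: "x \<in> D'" and y: "y \<in> V - D'"
        have yA: "y \<notin> A" "y \<noteq> u" "y \<notin> D" using y unfolding D'_def by auto
        then have Euy: "E u y" using y unfolding A_def by auto
        show "E' x y"
        proof (cases "x \<in> D")
          case True
          then have "x \<notin> A" using DA by auto
          then show ?thesis using ev out True y yA by auto
        next
          case False
          then have "x \<in> insert u A" using x unfolding D'_def by auto
          then show ?thesis using ev Euy yA uA by auto
        qed
      qed
      have inn': "\<forall>x\<in>D'. \<forall>y\<in>D'. E' x y \<longleftrightarrow> p' x \<noteq> p' y"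
      proof (intro ballI)
        fix x y assume x: "x \<in> D'" and y: "y \<in> D'"
        have cases_x: "x \<in> D \<or> x \<in> insert u A" and cases_y: "y \<in> D \<or> y \<in> insert u A"
          using x y unfolding D'_def by auto
        have Dnot: "\<And>z. z \<in> D \<Longrightarrow> z \<notin> insert u A" using DA u by auto
        have Du: "\<And>z. z \<in> D \<Longrightarrow> E z u" using out u by auto
        show "E' x y \<longleftrightarrow> p' x \<noteq> p' y"
        proof (cases "x \<in> D")
          case xD: True
          show ?thesis
          proof (cases "y \<in> D")
            case True
            then show ?thesis using xD inn ev Dnot DA unfolding p'_def by auto
          next
            case False
            then have yi: "y \<in> insert u A" using cases_y by auto
            have "E' x y = E x u" using ev xD yi Dnot DA uA by auto
            moreover have "p' x \<noteq> p' y" using xD yi c Dnot unfolding p'_def by auto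
            ultimately show ?thesis using Du xD by auto
          qed
        next
          case xN: False
          then have xi: "x \<in> insert u A" using cases_x by auto
          show ?thesis
          proof (cases "y \<in> D")
            case True
            have "E' x y = E u y" using ev xi True Dnot DA uA by auto
            moreover have "p' x \<noteq> p' y" using True xi c Dnot unfolding p'_def by force
            ultimately show ?thesis using Du[OF True] sym by auto
          next
            case False
            then have yi: "y \<in> insert u A" using cases_y by auto
            have "E' x y = E u u" using ev xi yi uA by auto
            then show ?thesis using irr xi yi unfolding p'_def by auto
          qed
        qed
      qed
      show ?thesis using less.IH[OF lt] mx' D'V out' inn' by blast
    qed
  qed
qed

lemma sym_exists:
  assumes tw: "twinF VF EF" and mx: "maxg VF EF V E"
  shows "\<exists>E'. maxg VF EF V E' \<and> complete_multipartite V E'"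
proof -
  have "maxg VF EF V E \<and> {} \<subseteq> V \<and> card (V - {}) = card V \<and> (\<forall>x\<in>{}. \<forall>y\<in>V - {}. E x y)
      \<and> (\<forall>x\<in>{}. \<forall>y\<in>{}. E x y \<longleftrightarrow> (\<lambda>_. 0::nat) x \<noteq> (\<lambda>_. 0::nat) y)" using mx by simp
  then show ?thesis using sym_step[OF tw, of V "card V"] by blast
qed

lemma label_iso:
  assumes fV: "finite V" and fW: "finite W" and bphi: "bij_betw \<phi> (p ` V) (q ` W)"
    and cs: "\<forall>c\<in>p ` V. card {x\<in>V. p x = c} = card {y\<in>W. q y = \<phi> c}"
  shows "\<exists>f. bij_betw f V W \<and> (\<forall>x\<in>V. q (f x) = \<phi> (p x))"
proof -
  have "\<forall>c\<in>p ` V. \<exists>g. bij_betw g {x\<in>V. p x = c} {y\<in>W. q y = \<phi> c}"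
  proof
    fix c assume "c \<in> p ` V"
    then show "\<exists>g. bij_betw g {x\<in>V. p x = c} {y\<in>W. q y = \<phi> c}"
      using finite_same_card_bij[of "{x\<in>V. p x = c}" "{y\<in>W. q y = \<phi> c}"] fV fW cs by auto
  qed
  then obtain g where g: "\<And>c. c \<in> p ` V \<Longrightarrow> bij_betw (g c) {x\<in>V. p x = c} {y\<in>W. q y = \<phi> c}"
    by metis
  define f where "f = (\<lambda>x. g (p x) x)"
  have fin: "\<And>x. x \<in> V \<Longrightarrow> f x \<in> W \<and> q (f x) = \<phi> (p x)"
  proof -
    fix x assume x: "x \<in> V"
    have "f x \<in> {y\<in>W. q y = \<phi> (p x)}" unfolding f_def using g[of "p x"] x by (auto dest: bij_betwE)
    then show "f x \<in> W \<and> q (f x) = \<phi> (p x)" by simp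
  qed
  have inj_phi: "inj_on \<phi> (p ` V)" using bphi by (simp add: bij_betw_def)
  have "inj_on f V"
  proof (rule inj_onI)
    fix x y assume x: "x \<in> V" and y: "y \<in> V" and e: "f x = f y"
    have "\<phi> (p x) = \<phi> (p y)" using fin[OF x] fin[OF y] e by simp
    then have pxy: "p x = p y" using inj_phi x y by (auto dest: inj_onD)
    have "inj_on (g (p x)) {z\<in>V. p z = p x}" using g[of "p x"] x by (simp add: bij_betw_def)
    then show "x = y" using e x y pxy unfolding f_def by (auto dest: inj_onD)
  qed
  moreover have "f ` V = W"
  proof
    show "f ` V \<subseteq> W" using fin by auto
  next
    show "W \<subseteq> f ` V"
    proof
      fix y assume y: "y \<in> W"
      then have "q y \<in> \<phi> ` (p ` V)" using bphi by (simp add: bij_betw_def)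
      then obtain c where c: "c \<in> p ` V" and qc: "q y = \<phi> c" by blast
      have "y \<in> g c ` {x\<in>V. p x = c}" using g[OF c] y qc by (simp add: bij_betw_def)
      then obtain x where x: "x \<in> V" "p x = c" and yx: "y = g c x" by blast
      have "f x = y" unfolding f_def using x yx by simp
      then show "y \<in> f ` V" using x by blast
    qed
  qed
  ultimately show ?thesis using fin unfolding bij_betw_def by blast
qed

lemma kernel_card:
  assumes "\<forall>x\<in>S. \<forall>y\<in>S. a x = a y \<longleftrightarrow> b x = b y"
  shows "card (a ` S) = card (b ` S)"
proof -
  define h where "h = (\<lambda>c. b (inv_into S a c))"
  have hb: "\<And>x. x \<in> S \<Longrightarrow> h (a x) = b x"
  proof -
    fix x assume x: "x \<in> S"
    have i: "inv_into S a (a x) \<in> S" using x by (simp add: inv_into_into)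
    have "a (inv_into S a (a x)) = a x" using x by (simp add: f_inv_into_f)
    then show "h (a x) = b x" unfolding h_def using assms i x by blast
  qed
  have "h ` (a ` S) = b ` S" using hb by (force simp: image_image)
  moreover have "inj_on h (a ` S)"
  proof (rule inj_onI)
    fix c d assume "c \<in> a ` S" "d \<in> a ` S" "h c = h d"
    then obtain x y where "x \<in> S" "y \<in> S" "c = a x" "d = a y" "b x = b y" using hb by auto
    then show "c = d" using assms by auto
  qed
  ultimately show ?thesis by (metis card_image)
qed

definition goodp :: "('a \<Rightarrow> nat) \<Rightarrow> nat \<Rightarrow> nat \<Rightarrow> 'a set \<Rightarrow> bool" where
  "goodp p t r S \<longleftrightarrow> finite S \<and> card (p ` S) = r \<and> (\<forall>c\<in>p ` S. card {x\<in>S. p x = c} = t)"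

definition mp_graph :: "'a set \<Rightarrow> ('a \<Rightarrow> nat) \<Rightarrow> 'a \<Rightarrow> 'a \<Rightarrow> bool" where
  "mp_graph V p = (\<lambda>x y. x \<in> V \<and> y \<in> V \<and> p x \<noteq> p y)"

lemma Kpart_fst: "t \<ge> 1 \<Longrightarrow> fst ` Kpart_V r t = {0..<r}"
  unfolding Kpart_V_def by force

lemma Kpart_class: "i < r \<Longrightarrow> {y\<in>Kpart_V r t. fst y = i} = {i} \<times> {0..<t}"
  unfolding Kpart_V_def by auto

lemma card_Kpart_V: "card (Kpart_V r t) = r * t"
  unfolding Kpart_V_def by simp

lemma good_iff:
  assumes t: "t \<ge> 1" and SV: "S \<subseteq> V" and fV: "finite V"
    and mp: "\<forall>x\<in>V. \<forall>y\<in>V. E x y \<longleftrightarrow> p x \<noteq> p y"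
  shows "(card S = card (Kpart_V r t) \<and> graph_iso S (induced E S) (Kpart_V r t) (Kpart_E r t)) \<longleftrightarrow> goodp p t r S"
proof
  assume H: "card S = card (Kpart_V r t) \<and> graph_iso S (induced E S) (Kpart_V r t) (Kpart_E r t)"
  then obtain f where bf: "bij_betw f S (Kpart_V r t)"
    and ef: "\<forall>x\<in>S. \<forall>y\<in>S. induced E S x y \<longleftrightarrow> Kpart_E r t (f x) (f y)"
    unfolding graph_iso_def by blast
  have fS: "\<And>x. x \<in> S \<Longrightarrow> f x \<in> Kpart_V r t" using bf by (auto dest: bij_betwE)
  have ker: "\<forall>x\<in>S. \<forall>y\<in>S. p x = p y \<longleftrightarrow> fst (f x) = fst (f y)"
  proof (intro ballI)
    fix x y assume x: "x \<in> S" and y: "y \<in> S"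
    have "induced E S x y \<longleftrightarrow> p x \<noteq> p y" using mp SV x y unfolding induced_def by auto
    moreover have "Kpart_E r t (f x) (f y) \<longleftrightarrow> fst (f x) \<noteq> fst (f y)" using fS x y unfolding Kpart_E_def by auto
    ultimately show "p x = p y \<longleftrightarrow> fst (f x) = fst (f y)" using ef x y by blast
  qed
  have fin: "finite S" using SV fV finite_subset by blast
  have "card (p ` S) = card ((\<lambda>x. fst (f x)) ` S)" using kernel_card[OF ker] .
  also have "(\<lambda>x. fst (f x)) ` S = fst ` Kpart_V r t" using bf by (auto simp: bij_betw_def image_image[symmetric] simp del: image_image)
  also have "\<dots> = {0..<r}" using Kpart_fst[OF t] .
  finally have c1: "card (p ` S) = r" by simp
  have c2: "\<forall>c\<in>p ` S. card {x\<in>S. p x = c} = t"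
  proof
    fix c assume "c \<in> p ` S"
    then obtain x0 where x0: "x0 \<in> S" "p x0 = c" by blast
    have i: "fst (f x0) < r" using fS[OF x0(1)] unfolding Kpart_V_def by auto
    have "{x\<in>S. p x = c} = {x\<in>S. fst (f x) = fst (f x0)}" using ker x0 by auto
    moreover have "f ` {x\<in>S. fst (f x) = fst (f x0)} = {y\<in>f ` S. fst y = fst (f x0)}" by auto
    moreover have "f ` S = Kpart_V r t" using bf by (simp add: bij_betw_def)
    moreover have "inj_on f {x\<in>S. fst (f x) = fst (f x0)}" using bf by (auto simp: bij_betw_def intro: inj_on_subset)
    ultimately have "card {x\<in>S. p x = c} = card {y\<in>Kpart_V r t. fst y = fst (f x0)}"
      by (metis card_image)
    also have "\<dots> = t" using Kpart_class[OF i] by simp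
    finally show "card {x\<in>S. p x = c} = t" .
  qed
  show "goodp p t r S" unfolding goodp_def using fin c1 c2 by blast
next
  assume G: "goodp p t r S"
  have fin: "finite S" and c1: "card (p ` S) = r" and c2: "\<forall>c\<in>p ` S. card {x\<in>S. p x = c} = t"
    using G unfolding goodp_def by blast+
  have fK: "finite (Kpart_V r t)" unfolding Kpart_V_def by simp
  have "card (p ` S) = card (fst ` Kpart_V r t)" using c1 Kpart_fst[OF t] by simp
  then obtain \<phi> where bphi: "bij_betw \<phi> (p ` S) (fst ` Kpart_V r t)"
    using finite_same_card_bij fin fK by (metis finite_imageI)
  have cs: "\<forall>c\<in>p ` S. card {x\<in>S. p x = c} = card {y\<in>Kpart_V r t. fst y = \<phi> c}"
  proof
    fix c assume c: "c \<in> p ` S"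
    have "\<phi> c < r" using bphi c Kpart_fst[OF t] by (auto dest: bij_betwE)
    then have "card {y\<in>Kpart_V r t. fst y = \<phi> c} = t" using Kpart_class by simp
    moreover have "card {x\<in>S. p x = c} = t" using c2 c by blast
    ultimately show "card {x\<in>S. p x = c} = card {y\<in>Kpart_V r t. fst y = \<phi> c}" by simp
  qed
  obtain f where bf: "bij_betw f S (Kpart_V r t)" and qf: "\<forall>x\<in>S. fst (f x) = \<phi> (p x)"
    using label_iso[OF fin fK bphi cs] by blast
  have inj_phi: "inj_on \<phi> (p ` S)" using bphi by (simp add: bij_betw_def)
  have fS: "\<And>x. x \<in> S \<Longrightarrow> f x \<in> Kpart_V r t" using bf by (auto dest: bij_betwE)
  have "\<forall>x\<in>S. \<forall>y\<in>S. induced E S x y \<longleftrightarrow> Kpart_E r t (f x) (f y)"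
  proof (intro ballI)
    fix x y assume x: "x \<in> S" and y: "y \<in> S"
    have "induced E S x y \<longleftrightarrow> p x \<noteq> p y" using mp SV x y unfolding induced_def by auto
    also have "\<dots> \<longleftrightarrow> \<phi> (p x) \<noteq> \<phi> (p y)" using inj_phi x y by (auto dest: inj_onD)
    also have "\<dots> \<longleftrightarrow> Kpart_E r t (f x) (f y)" using qf fS x y unfolding Kpart_E_def by auto
    finally show "induced E S x y \<longleftrightarrow> Kpart_E r t (f x) (f y)" .
  qed
  then show "card S = card (Kpart_V r t) \<and> graph_iso S (induced E S) (Kpart_V r t) (Kpart_E r t)"
    using bf bij_betw_same_card unfolding graph_iso_def by blast
qed

definition cntp :: "('a \<Rightarrow> nat) \<Rightarrow> nat \<Rightarrow> nat \<Rightarrow> 'a set \<Rightarrow> nat" where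
  "cntp p t r V = card {S. S \<subseteq> V \<and> goodp p t r S}"

lemma ind_count_cntp:
  assumes t: "t \<ge> 1" and fV: "finite V" and mp: "\<forall>x\<in>V. \<forall>y\<in>V. E x y \<longleftrightarrow> p x \<noteq> p y"
  shows "ind_count (Kpart_V r t) (Kpart_E r t) V E = cntp p t r V"
proof -
  have "{S. S \<subseteq> V \<and> card S = card (Kpart_V r t) \<and> graph_iso S (induced E S) (Kpart_V r t) (Kpart_E r t)}
      = {S. S \<subseteq> V \<and> goodp p t r S}"
    using good_iff[OF t _ fV mp] by blast
  then show ?thesis unfolding ind_count_def cntp_def by simp
qed

lemma split_class:
  assumes t: "t \<ge> 1" and r: "r \<ge> 1" and fV: "finite V"
  shows "cntp p t r V = cntp p t r {x\<in>V. p x \<noteq> c}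
     + (card {x\<in>V. p x = c} choose t) * cntp p t (r - 1) {x\<in>V. p x \<noteq> c}"
proof -
  let ?P = "{x\<in>V. p x = c}" and ?R = "{x\<in>V. p x \<noteq> c}"
  let ?F = "{S. S \<subseteq> V \<and> goodp p t r S}"
  let ?F1 = "{S. S \<subseteq> ?R \<and> goodp p t r S}"
  let ?F2 = "{S\<in>?F. S \<inter> ?P \<noteq> {}}"
  let ?X = "{X. X \<subseteq> ?P \<and> card X = t}" and ?Z = "{Z. Z \<subseteq> ?R \<and> goodp p t (r - 1) Z}"
  have fF: "finite ?F" using fV by (auto intro: finite_subset[of _ "Pow V"])
  have F1: "{S\<in>?F. S \<inter> ?P = {}} = ?F1" by auto
  have "card ?F = card {S\<in>?F. S \<inter> ?P = {}} + card {S\<in>?F. \<not> S \<inter> ?P = {}}"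
    using split_card[OF fF] .
  then have cF: "card ?F = card ?F1 + card ?F2" using F1 by simp
  have img: "(\<lambda>(X, Z). X \<union> Z) ` (?X \<times> ?Z) = ?F2"
  proof
    show "(\<lambda>(X, Z). X \<union> Z) ` (?X \<times> ?Z) \<subseteq> ?F2"
    proof
      fix S assume "S \<in> (\<lambda>(X, Z). X \<union> Z) ` (?X \<times> ?Z)"
      then obtain X Z where X: "X \<subseteq> ?P" "card X = t" and Z: "Z \<subseteq> ?R" "goodp p t (r - 1) Z"
        and S: "S = X \<union> Z" by auto
      have Xne: "X \<noteq> {}" using X t by auto
      have fX: "finite X" using finite_subset[OF X(1)] fV by simp
      have fZ: "finite Z" and cZ: "card (p ` Z) = r - 1" and clZ: "\<forall>c\<in>p ` Z. card {x\<in>Z. p x = c} = t"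
        using Z unfolding goodp_def by blast+
      have pX: "p ` X = {c}" using X Xne by auto
      have cnZ: "c \<notin> p ` Z" using Z by auto
      have pS: "p ` S = insert c (p ` Z)" using pX S by auto
      have c1: "card (p ` S) = r" using pS cnZ cZ fZ r by simp
      have c2: "\<forall>d\<in>p ` S. card {x\<in>S. p x = d} = t"
      proof
        fix d assume d: "d \<in> p ` S"
        show "card {x\<in>S. p x = d} = t"
        proof (cases "d = c")
          case True
          have "{x\<in>S. p x = d} = X" using S X Z True by auto
          then show ?thesis using X by simp
        next
          case False
          then have dZ: "d \<in> p ` Z" using d pS by auto
          have "{x\<in>S. p x = d} = {x\<in>Z. p x = d}" using S X False by auto
          moreover have "card {x\<in>Z. p x = d} = t" using clZ dZ by blast
          ultimately show ?thesis by simp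
        qed
      qed
      have "goodp p t r S" unfolding goodp_def using c1 c2 fX fZ S by simp
      moreover have "S \<subseteq> V" "S \<inter> ?P \<noteq> {}" using S X Z Xne by auto
      ultimately show "S \<in> ?F2" by simp
    qed
  next
    show "?F2 \<subseteq> (\<lambda>(X, Z). X \<union> Z) ` (?X \<times> ?Z)"
    proof
      fix S assume S: "S \<in> ?F2"
      then have SV: "S \<subseteq> V" and g: "goodp p t r S" and ne: "S \<inter> ?P \<noteq> {}" by auto
      have fS: "finite S" and cS: "card (p ` S) = r" and clS: "\<forall>c\<in>p ` S. card {x\<in>S. p x = c} = t"
        using g unfolding goodp_def by blast+
      have cin: "c \<in> p ` S" using ne by auto
      define X where "X = {x\<in>S. p x = c}"
      define Z where "Z = {x\<in>S. p x \<noteq> c}"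
      have X: "X \<subseteq> ?P" "card X = t" using SV clS cin unfolding X_def by auto
      have pZ: "p ` Z = p ` S - {c}" unfolding Z_def by auto
      have fZ: "finite Z" using fS unfolding Z_def by simp
      have cZ: "card (p ` Z) = r - 1" using pZ cS cin fS by (simp add: card_Diff_singleton)
      have clZ: "\<forall>d\<in>p ` Z. card {x\<in>Z. p x = d} = t"
      proof
        fix d assume d: "d \<in> p ` Z"
        then have "d \<noteq> c" "d \<in> p ` S" using pZ by auto
        moreover have "{x\<in>Z. p x = d} = {x\<in>S. p x = d}" using \<open>d \<noteq> c\<close> unfolding Z_def by auto
        moreover have "card {x\<in>S. p x = d} = t" using clS \<open>d \<in> p ` S\<close> by blast
        ultimately show "card {x\<in>Z. p x = d} = t" by simp
      qed
      have Z: "Z \<subseteq> ?R" "goodp p t (r - 1) Z" using SV fZ cZ clZ unfolding Z_def goodp_def by auto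
      have "S = X \<union> Z" unfolding X_def Z_def by auto
      then show "S \<in> (\<lambda>(X, Z). X \<union> Z) ` (?X \<times> ?Z)" using X Z by blast
    qed
  qed
  have inj: "inj_on (\<lambda>(X, Z). X \<union> Z) (?X \<times> ?Z)"
  proof (rule inj_onI)
    fix a b assume a: "a \<in> ?X \<times> ?Z" and b: "b \<in> ?X \<times> ?Z" and e: "(\<lambda>(X, Z). X \<union> Z) a = (\<lambda>(X, Z). X \<union> Z) b"
    obtain X1 Z1 where a1: "a = (X1, Z1)" by fastforce
    obtain X2 Z2 where b1: "b = (X2, Z2)" by fastforce
    have u: "X1 \<union> Z1 = X2 \<union> Z2" using e a1 b1 by simp
    have h1: "X1 \<subseteq> ?P" "Z1 \<subseteq> ?R" "X2 \<subseteq> ?P" "Z2 \<subseteq> ?R" using a b a1 b1 by auto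
    have "X1 = (X1 \<union> Z1) \<inter> ?P" "X2 = (X2 \<union> Z2) \<inter> ?P" using h1 by auto
    then have "X1 = X2" using u by simp
    moreover have "Z1 = (X1 \<union> Z1) - ?P" "Z2 = (X2 \<union> Z2) - ?P" using h1 by auto
    then have "Z1 = Z2" using u by simp
    ultimately show "a = b" using a1 b1 by simp
  qed
  have fP: "finite ?P" using fV by simp
  have "card ?F2 = card (?X \<times> ?Z)" using card_image[OF inj] img by simp
  also have "\<dots> = card ?X * card ?Z" by (rule card_cartesian_product)
  also have "card ?X = card ?P choose t" using n_subsets[OF fP] .
  finally show ?thesis using cF unfolding cntp_def by simp
qed

lemma cntp_cong:
  assumes "\<forall>x\<in>V. p x = q x"
  shows "cntp p t r V = cntp q t r V"
proof -
  have "\<And>S. S \<subseteq> V \<Longrightarrow> goodp p t r S = goodp q t r S"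
  proof -
    fix S assume SV: "S \<subseteq> V"
    have eq: "\<forall>x\<in>S. p x = q x" using assms SV by auto
    then have "p ` S = q ` S" by (auto simp: image_def)
    moreover have "\<And>c. {x\<in>S. p x = c} = {x\<in>S. q x = c}" using eq by auto
    ultimately show "goodp p t r S = goodp q t r S" unfolding goodp_def by simp
  qed
  then have "{S. S \<subseteq> V \<and> goodp p t r S} = {S. S \<subseteq> V \<and> goodp q t r S}" by blast
  then show ?thesis unfolding cntp_def by simp
qed

lemma cntp_zero_up:
  assumes t: "t \<ge> 1" and fV: "finite V" and z: "cntp p t r V = 0"
  shows "cntp p t (Suc r) V = 0"
proof -
  show ?thesis
  proof (rule ccontr)
    assume "cntp p t (Suc r) V \<noteq> 0"
    then have "{S. S \<subseteq> V \<and> goodp p t (Suc r) S} \<noteq> {}" unfolding cntp_def by (metis card.empty)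
    then obtain S where SV: "S \<subseteq> V" and g: "goodp p t (Suc r) S" by blast
    have cS: "card (p ` S) = Suc r" and fS: "finite S" and clS: "\<forall>c\<in>p ` S. card {x\<in>S. p x = c} = t"
      using g unfolding goodp_def by blast+
    obtain c where c: "c \<in> p ` S" using cS by fastforce
    define Z where "Z = {x\<in>S. p x \<noteq> c}"
    have pZ: "p ` Z = p ` S - {c}" unfolding Z_def by auto
    have "goodp p t r Z"
      unfolding goodp_def
    proof (intro conjI)
      show "finite Z" using fS unfolding Z_def by simp
      show "card (p ` Z) = r" using pZ cS c fS by (simp add: card_Diff_singleton)
      show "\<forall>d\<in>p ` Z. card {x\<in>Z. p x = d} = t"
      proof
        fix d assume d: "d \<in> p ` Z"
        then have "d \<noteq> c" "d \<in> p ` S" using pZ by auto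
        moreover have "{x\<in>Z. p x = d} = {x\<in>S. p x = d}" using \<open>d \<noteq> c\<close> unfolding Z_def by auto
        moreover have "card {x\<in>S. p x = d} = t" using clS \<open>d \<in> p ` S\<close> by blast
        ultimately show "card {x\<in>Z. p x = d} = t" by simp
      qed
    qed
    moreover have "Z \<subseteq> V" using SV unfolding Z_def by auto
    ultimately have "Z \<in> {S. S \<subseteq> V \<and> goodp p t r S}" by simp
    moreover have "finite {S. S \<subseteq> V \<and> goodp p t r S}" using fV by (auto intro: finite_subset[of _ "Pow V"])
    ultimately have "cntp p t r V > 0" unfolding cntp_def by (metis card_gt_0_iff empty_iff)
    then show False using z by simp
  qed
qed

lemma two_class:
  assumes t: "t \<ge> 1" and r: "r \<ge> 2" and fV: "finite V" and c12: "c1 \<noteq> c2"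
  shows "cntp p t r V = cntp p t r {x\<in>V. p x \<noteq> c1 \<and> p x \<noteq> c2}
     + ((card {x\<in>V. p x = c1} choose t) + (card {x\<in>V. p x = c2} choose t)) * cntp p t (r - 1) {x\<in>V. p x \<noteq> c1 \<and> p x \<noteq> c2}
     + (card {x\<in>V. p x = c1} choose t) * (card {x\<in>V. p x = c2} choose t) * cntp p t (r - 2) {x\<in>V. p x \<noteq> c1 \<and> p x \<noteq> c2}"
proof -
  let ?R1 = "{x\<in>V. p x \<noteq> c1}"
  have fR1: "finite ?R1" using fV by simp
  have e1: "{x\<in>?R1. p x \<noteq> c2} = {x\<in>V. p x \<noteq> c1 \<and> p x \<noteq> c2}" by auto
  have e2: "{x\<in>?R1. p x = c2} = {x\<in>V. p x = c2}" using c12 by auto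
  have s1: "cntp p t r V = cntp p t r ?R1 + (card {x\<in>V. p x = c1} choose t) * cntp p t (r - 1) ?R1"
    using split_class[OF t _ fV] r by simp
  have s2: "cntp p t r ?R1 = cntp p t r {x\<in>V. p x \<noteq> c1 \<and> p x \<noteq> c2}
     + (card {x\<in>V. p x = c2} choose t) * cntp p t (r - 1) {x\<in>V. p x \<noteq> c1 \<and> p x \<noteq> c2}"
    using split_class[OF t _ fR1, of r p c2] r e1 e2 by simp
  have s3: "cntp p t (r - 1) ?R1 = cntp p t (r - 1) {x\<in>V. p x \<noteq> c1 \<and> p x \<noteq> c2}
     + (card {x\<in>V. p x = c2} choose t) * cntp p t (r - 1 - 1) {x\<in>V. p x \<noteq> c1 \<and> p x \<noteq> c2}"
    using split_class[OF t _ fR1, of "r - 1" p c2] r e1 e2 by simp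
  have "r - 1 - 1 = r - 2" by simp
  then show ?thesis using s1 s2 s3 by (simp add: algebra_simps)
qed

definition psi :: "nat \<Rightarrow> nat \<Rightarrow> real" where "psi k y = 1 / real (y choose k)"

lemma psi_diff:
  assumes "k \<le> y"
  shows "psi k y - psi k (Suc y) = real k / real (Suc k) * psi (Suc k) (Suc y)"
proof -
  have e1: "real (Suc y - k) * real (Suc y choose k) = real (Suc y) * real (y choose k)"
    using binomial_absorb_comp[of "Suc y" k] by (metis diff_Suc_1 of_nat_mult)
  have e2: "real (Suc y) * real (y choose k) = real (Suc y choose Suc k) * real (Suc k)"
    using Suc_times_binomial_eq[of y k] by (metis of_nat_mult)
  have p0: "real (y choose k) > 0" using assms by simp
  have p1: "real (Suc y choose k) > 0" using assms by (metis le_SucI of_nat_0_less_iff zero_less_binomial)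
  have "Suc y choose Suc k > 0" by (rule zero_less_binomial) (use assms in simp)
  then have p2: "real (Suc y choose Suc k) > 0" by (simp only: of_nat_0_less_iff)
  have sk: "real (Suc y - k) = real (Suc y) - real k" using assms by simp
  have c1: "real (Suc y choose k) = real (Suc y) * real (y choose k) / (real (Suc y) - real k)"
    using e1 sk assms by (simp add: field_simps)
  have c2: "real (Suc y choose Suc k) = real (Suc y) * real (y choose k) / real (Suc k)"
    using e2 by (simp add: field_simps)
  have yk: "real (Suc y) - real k > 0" using assms by simp
  define C where "C = real (y choose k)"
  define Y where "Y = real (Suc y)"
  define K where "K = real k"
  have C0: "C > 0" using p0 C_def by simp
  have Y0: "Y > 0" unfolding Y_def by simp
  have YK: "Y - K > 0" using yk unfolding Y_def K_def .
  have K0: "K + 1 > 0" unfolding K_def by simp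
  have l: "1 / C - 1 / (Y * C / (Y - K)) = K / (Y * C)"
    using C0 Y0 YK by (simp add: field_simps)
  have r1: "1 / (Y * C / (K + 1)) = (K + 1) / (Y * C)" by simp
  have r: "K / (K + 1) * (1 / (Y * C / (K + 1))) = K / (Y * C)"
    unfolding r1 using K0 by simp
  have "real (Suc k) = K + 1" unfolding K_def by simp
  then show ?thesis unfolding psi_def c1 c2 using l r unfolding C_def Y_def K_def by simp
qed

locale convx =
  fixes m :: nat
  assumes m1: "m \<ge> 1"
begin

definition "dl x = psi m x - psi m (Suc x)"
definition "DD x = dl x - dl (Suc x)"

lemma psi_pos: "x \<ge> k \<Longrightarrow> psi k x > 0" unfolding psi_def by simp

lemma dl_eq: "x \<ge> m \<Longrightarrow> dl x = real m / real (Suc m) * psi (Suc m) (Suc x)"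
  unfolding dl_def using psi_diff by simp

lemma DD_eq: "x \<ge> m \<Longrightarrow> DD x = real m / real (Suc m) * (real (Suc m) / real (Suc (Suc m))) * psi (Suc (Suc m)) (Suc (Suc x))"
proof -
  assume x: "x \<ge> m"
  have "DD x = real m / real (Suc m) * (psi (Suc m) (Suc x) - psi (Suc m) (Suc (Suc x)))"
    unfolding DD_def using dl_eq[of x] dl_eq[of "Suc x"] x by (simp add: algebra_simps)
  also have "psi (Suc m) (Suc x) - psi (Suc m) (Suc (Suc x)) = real (Suc m) / real (Suc (Suc m)) * psi (Suc (Suc m)) (Suc (Suc x))"
    using psi_diff[of "Suc m" "Suc x"] x by simp
  finally show ?thesis by simp
qed

lemma DD_step: "x \<ge> m \<Longrightarrow> DD (Suc x) < DD x"
proof -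
  assume x: "x \<ge> m"
  let ?c = "real m / real (Suc m) * (real (Suc m) / real (Suc (Suc m)))"
  have c: "?c > 0" using m1 by simp
  have e1: "DD x = ?c * psi (Suc (Suc m)) (Suc (Suc x))" using DD_eq[of x] x by simp
  have e2: "DD (Suc x) = ?c * psi (Suc (Suc m)) (Suc (Suc (Suc x)))" using DD_eq[of "Suc x"] x by simp
  have "DD x - DD (Suc x) = ?c * (psi (Suc (Suc m)) (Suc (Suc x)) - psi (Suc (Suc m)) (Suc (Suc (Suc x))))"
    by (simp only: e1 e2 right_diff_distrib)
  also have "psi (Suc (Suc m)) (Suc (Suc x)) - psi (Suc (Suc m)) (Suc (Suc (Suc x))) = real (Suc (Suc m)) / real (Suc (Suc (Suc m))) * psi (Suc (Suc (Suc m))) (Suc (Suc (Suc x)))"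
    using psi_diff[of "Suc (Suc m)" "Suc (Suc x)"] x by simp
  finally have "DD x - DD (Suc x) = ?c * (real (Suc (Suc m)) / real (Suc (Suc (Suc m))) * psi (Suc (Suc (Suc m))) (Suc (Suc (Suc x))))" .
  moreover have "psi (Suc (Suc (Suc m))) (Suc (Suc (Suc x))) > 0" using psi_pos x by simp
  moreover have "real (Suc (Suc m)) / real (Suc (Suc (Suc m))) > 0" by simp
  ultimately have "DD x - DD (Suc x) > 0" using c by (metis mult_pos_pos)
  then show ?thesis by simp
qed

lemma DD_mono: "p \<ge> m \<Longrightarrow> p < q \<Longrightarrow> DD q < DD p"
proof (induction q)
  case 0 then show ?case by simp
next
  case (Suc q)
  show ?case
  proof (cases "p = q")
    case True then show ?thesis using DD_step Suc.prems by simp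
  next
    case False
    then have "p < q" using Suc.prems by simp
    then have "DD q < DD p" using Suc.IH Suc.prems by simp
    moreover have "DD (Suc q) < DD q" using DD_step Suc.prems \<open>p < q\<close> by simp
    ultimately show ?thesis by simp
  qed
qed

lemma pair: "p \<ge> m \<Longrightarrow> Suc (Suc p) \<le> q \<Longrightarrow> dl (Suc p) + dl (q - 1) < dl p + dl q"
proof -
  assume p: "p \<ge> m" and q: "Suc (Suc p) \<le> q"
  have "DD (q - 1) < DD p" using DD_mono[OF p] q by simp
  moreover have "Suc (q - 1) = q" using q by simp
  ultimately have "dl (q - 1) - dl q < dl p - dl (Suc p)" unfolding DD_def by metis
  then show ?thesis by linarith
qed

lemma convQ: "\<forall>p\<ge>m. 2 * (psi m (Suc p) - psi m (p + k + 2)) < (real k + 1) * (dl p + dl (p + k + 2))"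
proof (induction k rule: less_induct)
  case (less k)
  show ?case
  proof (intro allI impI)
    fix p assume p: "p \<ge> m"
    consider "k = 0" | "k = 1" | "k \<ge> 2" by linarith
    then show "2 * (psi m (Suc p) - psi m (p + k + 2)) < (real k + 1) * (dl p + dl (p + k + 2))"
    proof cases
      case 1
      have "dl (Suc p) + dl (Suc p) < dl p + dl (p + 2)" using pair[OF p, of "p + 2"] by simp
      then show ?thesis using 1 unfolding dl_def by simp
    next
      case 2
      have "dl (Suc p) + dl (p + 2) < dl p + dl (p + 3)" using pair[OF p, of "p + 3"] by (simp add: numeral_eq_Suc)
      then show ?thesis using 2 unfolding dl_def by (simp add: numeral_eq_Suc algebra_simps)
    next
      case 3
      define j where "j = k - 2"
      have kj: "k = j + 2" using 3 j_def by simp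
      have IH0: "\<forall>p'\<ge>m. 2 * (psi m (Suc p') - psi m (p' + j + 2)) < (real j + 1) * (dl p' + dl (p' + j + 2))"
        using less.IH[of j] kj by simp
      have IH: "2 * (psi m (Suc (Suc p)) - psi m (Suc p + j + 2)) < (real j + 1) * (dl (Suc p) + dl (Suc p + j + 2))"
        using spec[OF IH0, of "Suc p"] p by simp
      have pr: "dl (Suc p) + dl (p + k + 1) < dl p + dl (p + k + 2)"
        using pair[OF p, of "p + k + 2"] by simp
      have tel: "psi m (Suc p) - psi m (p + k + 2) = dl (Suc p) + (psi m (Suc (Suc p)) - psi m (Suc p + j + 2)) + dl (p + k + 1)"
        unfolding dl_def kj by simp
      have e: "Suc p + j + 2 = p + k + 1" using kj by simp
      have "2 * (psi m (Suc p) - psi m (p + k + 2)) < 2 * dl (Suc p) + (real j + 1) * (dl (Suc p) + dl (p + k + 1)) + 2 * dl (p + k + 1)"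
        using IH tel[unfolded kj] unfolding kj by simp
      also have "\<dots> = (real k + 1) * (dl (Suc p) + dl (p + k + 1))" using kj by (simp add: algebra_simps)
      also have "\<dots> < (real k + 1) * (dl p + dl (p + k + 2))" using pr by simp
      finally show ?thesis .
    qed
  qed
qed

lemma convex_final:
  assumes b: "b \<ge> Suc m" and ab: "a \<ge> b + 2"
  shows "(real (a - b) + 1) * (psi m b - psi m (a - 1)) < (real (a - b) - 1) * (psi m (b - 1) - psi m a)"
proof -
  define p where "p = b - 1"
  define k where "k = a - b - 2"
  have p: "p \<ge> m" using b p_def by simp
  have bp: "b = Suc p" and a1: "a - 1 = p + k + 2" and a2: "a = Suc (p + k + 2)" and dk: "real (a - b) = real k + 2"
    using b ab unfolding p_def k_def by auto
  have Q: "2 * (psi m (Suc p) - psi m (p + k + 2)) < (real k + 1) * (dl p + dl (p + k + 2))"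
    using convQ p by blast
  show ?thesis unfolding bp a1 a2 dk using Q unfolding dl_def
    by (simp add: algebra_simps)
qed

end

lemma pascal_r: "real (Suc x choose Suc m) = real (x choose Suc m) + real (x choose m)"
  by simp

lemma absorb_r: "x \<ge> m \<Longrightarrow> real (Suc m) * real (x choose Suc m) = (real x - real m) * real (x choose m)"
proof -
  assume x: "x \<ge> m"
  have "Suc m * (x choose Suc m) = (x - m) * (x choose m)"
    using binomial_absorption[of m x] binomial_absorb_comp[of x m] by simp
  then have "real (Suc m) * real (x choose Suc m) = real (x - m) * real (x choose m)"
    by (metis of_nat_mult)
  then show ?thesis using x by simp
qed

lemma arith_key:
  fixes A B C0 a b t :: nat
  assumes t2: "t \<ge> 2" and b1: "b \<ge> 1" and ab: "a \<ge> b + 2" and at: "a \<ge> t"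
    and h1: "C0 + (((a - 1) choose t) + ((b + 1) choose t)) * A + ((a - 1) choose t) * ((b + 1) choose t) * B
          \<le> C0 + ((a choose t) + (b choose t)) * A + (a choose t) * (b choose t) * B"
    and h2: "C0 + (((a + 1) choose t) + ((b - 1) choose t)) * A + ((a + 1) choose t) * ((b - 1) choose t) * B
          \<le> C0 + ((a choose t) + (b choose t)) * A + (a choose t) * (b choose t) * B"
    and pos: "0 < C0 + ((a choose t) + (b choose t)) * A + (a choose t) * (b choose t) * B"
    and hB: "B = 0 \<Longrightarrow> A = 0" and hA: "A = 0 \<Longrightarrow> C0 = 0"
  shows False
proof -
  obtain m where tm: "t = Suc m" using t2 by (cases t) auto
  have m1: "m \<ge> 1" using t2 tm by simp
  show False
  proof (cases "b < t")
    case True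
    have fb: "b choose t = 0" "(b - 1) choose t = 0" using True by auto
    have A0: "A > 0"
    proof (rule ccontr)
      assume "\<not> A > 0"
      then have "A = 0" by simp
      then show False using hA pos fb by simp
    qed
    have "((a + 1) choose t) * A \<le> (a choose t) * A" using h2[unfolded fb] by simp
    then have le: "(a + 1) choose t \<le> a choose t" using A0 by simp
    have "((a + 1) choose t) = (a choose t) + (a choose m)" using tm by simp
    moreover have "a choose m > 0" using at tm by simp
    ultimately show False using le by simp
  next
    case False
    then have bt: "b \<ge> t" by simp
    define FA1 where "FA1 = real ((a - 1) choose t)"
    define FA where "FA = real (a choose t)"
    define FA2 where "FA2 = real ((a + 1) choose t)"
    define FB1 where "FB1 = real ((b - 1) choose t)"
    define FB where "FB = real (b choose t)"
    define FB2 where "FB2 = real ((b + 1) choose t)"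
    define H where "H = (\<lambda>x. real (x choose m))"
    define d where "d = real (a - b)"
    define rA where "rA = real A"
    define rB where "rB = real B"
    define T where "T = real t"
    have d2: "d \<ge> 2" using ab unfolding d_def by simp
    have ad: "real a - real b = d" using ab unfolding d_def by simp
    have a1: "Suc (a - 1) = a" and b1': "Suc (b - 1) = b" using ab b1 by auto
    have pA: "FA = FA1 + H (a - 1)" unfolding FA_def FA1_def H_def tm
      using pascal_r[of "a - 1" m] a1 by simp
    have pB2: "FB2 = FB + H b" unfolding FB2_def FB_def H_def tm using pascal_r[of b m] by simp
    have pA2: "FA2 = FA + H a" unfolding FA2_def FA_def H_def tm using pascal_r[of a m] by simp
    have pB: "FB = FB1 + H (b - 1)" unfolding FB_def FB1_def H_def tm
      using pascal_r[of "b - 1" m] b1' by simp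
    have tA1: "T * FA1 = (real a - 1 - real m) * H (a - 1)"
      unfolding T_def FA1_def H_def tm using absorb_r[of m "a - 1"] ab bt tm by simp
    have tA: "T * FA = (real a - real m) * H a"
      unfolding T_def FA_def H_def tm using absorb_r[of m a] ab bt tm by simp
    have tB1: "T * FB1 = (real b - 1 - real m) * H (b - 1)"
      unfolding T_def FB1_def H_def tm using absorb_r[of m "b - 1"] bt tm by simp
    have tB: "T * FB = (real b - real m) * H b"
      unfolding T_def FB_def H_def tm using absorb_r[of m b] bt tm by simp
    have Hpos: "\<And>x. x \<ge> m \<Longrightarrow> H x > 0" unfolding H_def by simp
    have Ha1: "H (a - 1) > 0" and Ha: "H a > 0" and Hb1: "H (b - 1) > 0" and Hb: "H b > 0"
      using Hpos ab bt tm by auto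
    have T0: "T > 0" unfolding T_def using t2 by simp
    have h1r: "(FA1 + FB2) * rA + FA1 * FB2 * rB \<le> (FA + FB) * rA + FA * FB * rB"
    proof -
      have "real (C0 + (((a - 1) choose t) + ((b + 1) choose t)) * A + ((a - 1) choose t) * ((b + 1) choose t) * B)
          \<le> real (C0 + ((a choose t) + (b choose t)) * A + (a choose t) * (b choose t) * B)"
        using h1 by (simp only: of_nat_le_iff)
      then show ?thesis unfolding FA1_def FB2_def FA_def FB_def rA_def rB_def by simp
    qed
    have h2r: "(FA2 + FB1) * rA + FA2 * FB1 * rB \<le> (FA + FB) * rA + FA * FB * rB"
    proof -
      have "real (C0 + (((a + 1) choose t) + ((b - 1) choose t)) * A + ((a + 1) choose t) * ((b - 1) choose t) * B)
          \<le> real (C0 + ((a choose t) + (b choose t)) * A + (a choose t) * (b choose t) * B)"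
        using h2 by (simp only: of_nat_le_iff)
      then show ?thesis unfolding FA2_def FB1_def FA_def FB_def rA_def rB_def by simp
    qed
    have i0: "rA * H b + rB * (FA1 * H b - H (a - 1) * FB) \<le> rA * H (a - 1)"
      using h1r unfolding pA pB2 by (simp add: algebra_simps)
    have "T * (FA1 * H b - H (a - 1) * FB) = H b * (T * FA1) - H (a - 1) * (T * FB)" by (simp add: algebra_simps)
    also have "\<dots> = (d - 1) * H (a - 1) * H b" unfolding tA1 tB using ad by (simp add: algebra_simps)
    finally have k1: "T * (FA1 * H b - H (a - 1) * FB) = (d - 1) * H (a - 1) * H b" .
    have i1: "rA * T * H b + rB * ((d - 1) * H (a - 1) * H b) \<le> rA * T * H (a - 1)"
    proof -
      have "T * (rA * H b + rB * (FA1 * H b - H (a - 1) * FB)) \<le> T * (rA * H (a - 1))"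
        using i0 T0 by simp
      moreover have "T * (rA * H b + rB * (FA1 * H b - H (a - 1) * FB)) = rA * T * H b + rB * (T * (FA1 * H b - H (a - 1) * FB))"
        by (simp add: algebra_simps)
      moreover have "T * (rA * H (a - 1)) = rA * T * H (a - 1)" by simp
      ultimately show ?thesis unfolding k1 by linarith
    qed
    have j0: "rA * H a + rB * (H a * FB1 - FA * H (b - 1)) \<le> rA * H (b - 1)"
      using h2r unfolding pA2 pB by (simp add: algebra_simps)
    have "T * (H a * FB1 - FA * H (b - 1)) = H a * (T * FB1) - H (b - 1) * (T * FA)" by (simp add: algebra_simps)
    also have "\<dots> = - ((d + 1) * H a * H (b - 1))" unfolding tB1 tA using ad by (simp add: algebra_simps)
    finally have k2: "T * (H a * FB1 - FA * H (b - 1)) = - ((d + 1) * H a * H (b - 1))" .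
    have j1: "rA * T * H a \<le> rA * T * H (b - 1) + rB * ((d + 1) * H a * H (b - 1))"
    proof -
      have "T * (rA * H a + rB * (H a * FB1 - FA * H (b - 1))) \<le> T * (rA * H (b - 1))"
        using j0 T0 by simp
      moreover have "T * (rA * H a + rB * (H a * FB1 - FA * H (b - 1))) = rA * T * H a + rB * (T * (H a * FB1 - FA * H (b - 1)))"
        by (simp add: algebra_simps)
      moreover have "T * (rA * H (b - 1)) = rA * T * H (b - 1)" by simp
      ultimately show ?thesis unfolding k2 by linarith
    qed
    define X where "X = psi m b - psi m (a - 1)"
    define Y where "Y = psi m (b - 1) - psi m a"
    have psiH: "\<And>x. psi m x = 1 / H x" unfolding psi_def H_def by simp
    have X_eq: "X = (H (a - 1) - H b) / (H (a - 1) * H b)"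
      unfolding X_def psiH using Ha1 Hb by (simp add: field_simps)
    have Y_eq: "Y = (H a - H (b - 1)) / (H a * H (b - 1))"
      unfolding Y_def psiH using Ha Hb1 by (simp add: field_simps)
    have i2: "rB * (d - 1) \<le> rA * T * X"
    proof -
      have "rB * (d - 1) * (H (a - 1) * H b) \<le> rA * T * (H (a - 1) - H b)"
        using i1 by (simp add: algebra_simps)
      then have "rB * (d - 1) \<le> rA * T * (H (a - 1) - H b) / (H (a - 1) * H b)"
        using Ha1 Hb by (simp add: pos_le_divide_eq)
      then show ?thesis unfolding X_eq by simp
    qed
    have j2: "rA * T * Y \<le> rB * (d + 1)"
    proof -
      have "rA * T * (H a - H (b - 1)) \<le> rB * (d + 1) * (H a * H (b - 1))"
        using j1 by (simp add: algebra_simps)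
      then have "rA * T * (H a - H (b - 1)) / (H a * H (b - 1)) \<le> rB * (d + 1)"
        using Ha Hb1 by (simp add: pos_divide_le_eq)
      then show ?thesis unfolding Y_eq by simp
    qed
    have B0: "rB > 0"
    proof (rule ccontr)
      assume "\<not> rB > 0"
      then have "B = 0" unfolding rB_def by simp
      then show False using hB hA pos by simp
    qed
    have rA0: "rA \<ge> 0" unfolding rA_def by simp
    have X0: "X > 0"
    proof (rule ccontr)
      assume "\<not> X > 0"
      then have "rA * T * X \<le> 0" using rA0 T0 by (simp add: mult_nonneg_nonpos)
      moreover have "rB * (d - 1) > 0" using B0 d2 by simp
      ultimately show False using i2 by simp
    qed
    interpret convx m using m1 by unfold_locales
    have cf: "(d + 1) * X < (d - 1) * Y"
      using convex_final[of b a] bt tm ab unfolding X_def Y_def d_def by simp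
    have Y0: "Y > 0"
    proof -
      have "(d + 1) * X > 0" using X0 d2 by simp
      then have "(d - 1) * Y > 0" using cf by simp
      then show ?thesis using d2 by (simp add: zero_less_mult_iff)
    qed
    have "rB * (d - 1) * Y \<le> rA * T * X * Y" using i2 Y0 by (simp add: mult_right_mono)
    also have "\<dots> = (rA * T * Y) * X" by (simp add: algebra_simps)
    also have "\<dots> \<le> rB * (d + 1) * X" using j2 X0 by (simp add: mult_right_mono)
    finally have "rB * ((d - 1) * Y) \<le> rB * ((d + 1) * X)" by (simp add: algebra_simps)
    then have "(d - 1) * Y \<le> (d + 1) * X" using B0 by simp
    then show False using cf by simp
  qed
qed

lemma cntp_max_mp:
  assumes t: "t \<ge> 1" and sg: "simple_graph V E" and cV: "card V = n"
    and mp: "\<forall>x\<in>V. \<forall>y\<in>V. E x y \<longleftrightarrow> p x \<noteq> p y"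
    and eq: "ind_count (Kpart_V r t) (Kpart_E r t) V E = ind_max (Kpart_V r t) (Kpart_E r t) n"
  shows "cntp q t r V \<le> cntp p t r V"
proof -
  have fV: "finite V" using sg unfolding simple_graph_def by blast
  have sq: "simple_graph V (mp_graph V q)" using fV unfolding simple_graph_def mp_graph_def by auto
  have mq: "\<forall>x\<in>V. \<forall>y\<in>V. mp_graph V q x y \<longleftrightarrow> q x \<noteq> q y" unfolding mp_graph_def by auto
  have "cntp q t r V = ind_count (Kpart_V r t) (Kpart_E r t) V (mp_graph V q)"
    using ind_count_cntp[OF t fV mq] by simp
  also have "\<dots> \<le> ind_max (Kpart_V r t) (Kpart_E r t) n" using ind_count_le_max[OF sq cV] .
  also have "\<dots> = cntp p t r V" using eq ind_count_cntp[OF t fV mp] by simp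
  finally show ?thesis .
qed

lemma balanced_contra:
  assumes t2: "t \<ge> 2" and r2: "r \<ge> 2" and fV: "finite V"
    and maxp: "\<And>q. cntp q t r V \<le> cntp p t r V" and pos: "cntp p t r V > 0"
    and c1: "c1 \<in> p ` V" and c2: "c2 \<in> p ` V"
    and big: "card {x\<in>V. p x = c1} \<ge> card {x\<in>V. p x = c2} + 2"
    and at: "card {x\<in>V. p x = c1} \<ge> t"
  shows False
proof -
  have t: "t \<ge> 1" using t2 by simp
  define a where "a = card {x\<in>V. p x = c1}"
  define b where "b = card {x\<in>V. p x = c2}"
  have c12: "c1 \<noteq> c2" using big by auto
  have b1: "b \<ge> 1"
  proof -
    have "{x\<in>V. p x = c2} \<noteq> {}" using c2 by auto
    then show ?thesis unfolding b_def using fV by (simp add: Suc_le_eq card_gt_0_iff)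
  qed
  define R where "R = {x\<in>V. p x \<noteq> c1 \<and> p x \<noteq> c2}"
  define A where "A = cntp p t (r - 1) R"
  define B where "B = cntp p t (r - 2) R"
  define C0 where "C0 = cntp p t r R"
  have base: "cntp p t r V = C0 + ((a choose t) + (b choose t)) * A + (a choose t) * (b choose t) * B"
    using two_class[OF t r2 fV c12, of p] unfolding a_def b_def R_def A_def B_def C0_def .
  obtain v where v: "v \<in> V" "p v = c1" using c1 by auto
  obtain w where w: "w \<in> V" "p w = c2" using c2 by auto
  define p1 where "p1 = p(v := c2)"
  define p2 where "p2 = p(w := c1)"
  have R1: "{x\<in>V. p1 x \<noteq> c1 \<and> p1 x \<noteq> c2} = R" unfolding R_def p1_def using v by auto
  have R2: "{x\<in>V. p2 x \<noteq> c1 \<and> p2 x \<noteq> c2} = R" unfolding R_def p2_def using w by auto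
  have fR: "\<forall>x\<in>R. p1 x = p x" "\<forall>x\<in>R. p2 x = p x" unfolding R_def p1_def p2_def using v w by auto
  have s11: "{x\<in>V. p1 x = c1} = {x\<in>V. p x = c1} - {v}" unfolding p1_def using c12 by auto
  have s12: "{x\<in>V. p1 x = c2} = insert v {x\<in>V. p x = c2}" unfolding p1_def using v by auto
  have s21: "{x\<in>V. p2 x = c1} = insert w {x\<in>V. p x = c1}" unfolding p2_def using w by auto
  have s22: "{x\<in>V. p2 x = c2} = {x\<in>V. p x = c2} - {w}" unfolding p2_def using c12 by auto
  have ca1: "card {x\<in>V. p1 x = c1} = a - 1" unfolding s11 a_def using v fV by simp
  have cb1: "card {x\<in>V. p1 x = c2} = b + 1" unfolding s12 b_def using v fV c12 by simp
  have ca2: "card {x\<in>V. p2 x = c1} = a + 1" unfolding s21 a_def using w fV c12 by simp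
  have cb2: "card {x\<in>V. p2 x = c2} = b - 1" unfolding s22 b_def using w fV by simp
  have e1: "cntp p1 t r V = C0 + (((a - 1) choose t) + ((b + 1) choose t)) * A + ((a - 1) choose t) * ((b + 1) choose t) * B"
    using two_class[OF t r2 fV c12, of p1] unfolding R1 ca1 cb1 A_def B_def C0_def
      cntp_cong[OF fR(1)] by simp
  have e2: "cntp p2 t r V = C0 + (((a + 1) choose t) + ((b - 1) choose t)) * A + ((a + 1) choose t) * ((b - 1) choose t) * B"
    using two_class[OF t r2 fV c12, of p2] unfolding R2 ca2 cb2 A_def B_def C0_def
      cntp_cong[OF fR(2)] by simp
  have fR0: "finite R" using fV unfolding R_def by simp
  have hB: "B = 0 \<Longrightarrow> A = 0"
  proof -
    assume "B = 0"
    then have "cntp p t (Suc (r - 2)) R = 0" using cntp_zero_up[OF t fR0] unfolding B_def by blast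
    moreover have "Suc (r - 2) = r - 1" using r2 by simp
    ultimately show "A = 0" unfolding A_def by simp
  qed
  have hA: "A = 0 \<Longrightarrow> C0 = 0"
  proof -
    assume "A = 0"
    then have "cntp p t (Suc (r - 1)) R = 0" using cntp_zero_up[OF t fR0] unfolding A_def by blast
    moreover have "Suc (r - 1) = r" using r2 by simp
    ultimately show "C0 = 0" unfolding C0_def by simp
  qed
  have h1: "C0 + (((a - 1) choose t) + ((b + 1) choose t)) * A + ((a - 1) choose t) * ((b + 1) choose t) * B
          \<le> C0 + ((a choose t) + (b choose t)) * A + (a choose t) * (b choose t) * B"
    using maxp[of p1] unfolding e1 base .
  have h2: "C0 + (((a + 1) choose t) + ((b - 1) choose t)) * A + ((a + 1) choose t) * ((b - 1) choose t) * B
          \<le> C0 + ((a choose t) + (b choose t)) * A + (a choose t) * (b choose t) * B"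
    using maxp[of p2] unfolding e2 base .
  have pos': "0 < C0 + ((a choose t) + (b choose t)) * A + (a choose t) * (b choose t) * B"
    using pos unfolding base .
  have ab: "a \<ge> b + 2" using big unfolding a_def b_def .
  have at': "a \<ge> t" using at unfolding a_def .
  show False by (rule arith_key[OF t2 b1 ab at' h1 h2 pos' hB hA])
qed

lemma turan_class:
  assumes k: "k > 0" and c: "c < k"
  shows "card {y\<in>{0..<n}. y mod k = c} = n div k + (if c < n mod k then 1 else 0)"
proof (induction n)
  case 0 then show ?case by simp
next
  case (Suc n)
  have split: "{y\<in>{0..<Suc n}. y mod k = c} = {y\<in>{0..<n}. y mod k = c} \<union> (if n mod k = c then {n} else {})"
    by (auto simp: less_Suc_eq)
  have card: "card {y\<in>{0..<Suc n}. y mod k = c} = card {y\<in>{0..<n}. y mod k = c} + (if n mod k = c then 1 else 0)"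
    unfolding split by (simp add: card_insert_if)
  show ?case
  proof (cases "Suc (n mod k) = k")
    case True
    then have "Suc n mod k = 0" "Suc n div k = Suc (n div k)"
      by (simp_all add: mod_Suc div_Suc)
    then show ?thesis using card Suc.IH True c by auto
  next
    case False
    then have "Suc n mod k = Suc (n mod k)" "Suc n div k = n div k"
      by (simp_all add: mod_Suc div_Suc)
    then show ?thesis using card Suc.IH False c by auto
  qed
qed

lemma turan_mp: "\<forall>x\<in>{0..<n}. \<forall>y\<in>{0..<n}. turan_E k n x y \<longleftrightarrow> x mod k \<noteq> y mod k"
  unfolding turan_E_def by auto

lemma turan_simple: "simple_graph {0..<n} (turan_E k n)"
  unfolding simple_graph_def turan_E_def by auto

lemma turan_pos:
  assumes r: "r \<ge> 2" and t: "t \<ge> 1" and n: "n \<ge> r * t"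
  shows "cntp (\<lambda>x. x mod r) t r {0..<n} > 0"
proof -
  let ?p = "\<lambda>x::nat. x mod r"
  have r0: "r > 0" using r by simp
  have img: "?p ` {0..<r * t} = {0..<r}"
  proof
    show "?p ` {0..<r * t} \<subseteq> {0..<r}" using r0 by auto
    show "{0..<r} \<subseteq> ?p ` {0..<r * t}"
    proof
      fix c assume c: "c \<in> {0..<r}"
      then have "c < r * t" using t by (simp add: less_le_trans)
      moreover have "c mod r = c" using c by simp
      ultimately show "c \<in> ?p ` {0..<r * t}" by force
    qed
  qed
  have "goodp ?p t r {0..<r * t}"
    unfolding goodp_def
  proof (intro conjI)
    show "finite {0..<r * t}" by simp
    show "card (?p ` {0..<r * t}) = r" unfolding img by simp
    show "\<forall>c\<in>?p ` {0..<r * t}. card {x\<in>{0..<r * t}. x mod r = c} = t"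
    proof
      fix c assume "c \<in> ?p ` {0..<r * t}"
      then have c: "c < r" unfolding img by simp
      show "card {x\<in>{0..<r * t}. x mod r = c} = t"
        using turan_class[OF r0 c, of "r * t"] r0 by simp
    qed
  qed
  moreover have "{0..<r * t} \<subseteq> {0..<n}" using n by auto
  ultimately have "{0..<r * t} \<in> {S. S \<subseteq> {0..<n} \<and> goodp ?p t r S}" by simp
  moreover have "finite {S. S \<subseteq> {0..<n::nat} \<and> goodp ?p t r S}" by (auto intro: finite_subset[of _ "Pow {0..<n}"])
  ultimately show ?thesis unfolding cntp_def by (metis card_gt_0_iff empty_iff)
qed

lemma balanced_iso:
  assumes fV: "finite V" and cV: "card V = n" and Vne: "V \<noteq> {}"
    and mp: "\<forall>x\<in>V. \<forall>y\<in>V. E x y \<longleftrightarrow> p x \<noteq> p y"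
    and bal: "\<forall>c1\<in>p ` V. \<forall>c2\<in>p ` V. card {x\<in>V. p x = c1} \<le> card {x\<in>V. p x = c2} + 1"
  shows "graph_iso V E {0..<n} (turan_E (card (p ` V)) n)"
proof -
  define L where "L = p ` V"
  define k where "k = card L"
  define s where "s = (\<lambda>c. card {x\<in>V. p x = c})"
  have fL: "finite L" unfolding L_def using fV by simp
  have Lne: "L \<noteq> {}" unfolding L_def using Vne by simp
  have k0: "k > 0" unfolding k_def using fL Lne by (simp add: card_gt_0_iff)
  have kn: "k \<le> n" unfolding k_def L_def using cV card_image_le[OF fV, of p] by simp
  define m where "m = Min (s ` L)"
  have mL: "m \<in> s ` L" unfolding m_def using fL Lne by simp
  then obtain cmin where cmin: "cmin \<in> L" "s cmin = m" by auto
  have mle: "\<And>c. c \<in> L \<Longrightarrow> m \<le> s c" unfolding m_def using fL by simp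
  have sc: "\<And>c. c \<in> L \<Longrightarrow> s c = m \<or> s c = m + 1"
  proof -
    fix c assume c: "c \<in> L"
    have "s c \<le> s cmin + 1" using bal c cmin unfolding s_def L_def by blast
    then show "s c = m \<or> s c = m + 1" using mle[OF c] cmin by auto
  qed
  define Bg where "Bg = {c\<in>L. s c = m + 1}"
  define lb where "lb = card Bg"
  have BgL: "Bg \<subseteq> L" unfolding Bg_def by auto
  have fBg: "finite Bg" using fL BgL finite_subset by blast
  have lbk: "lb < k"
  proof -
    have "cmin \<notin> Bg" unfolding Bg_def using cmin by simp
    then have "Bg \<subset> L" using BgL cmin by blast
    then show ?thesis unfolding lb_def k_def using fL psubset_card_mono by blast
  qed
  have nsum: "n = (\<Sum>c\<in>L. s c)"
  proof -
    have "V = (\<Union>c\<in>L. {x\<in>V. p x = c})" unfolding L_def by auto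
    then have "card V = card (\<Union>c\<in>L. {x\<in>V. p x = c})" by simp
    also have "\<dots> = (\<Sum>c\<in>L. card {x\<in>V. p x = c})"
      by (rule card_UN_disjoint) (use fL fV in auto)
    finally show ?thesis using cV unfolding s_def by simp
  qed
  have "(\<Sum>c\<in>L. s c) = (\<Sum>c\<in>L. m + (if c \<in> Bg then 1 else 0))"
    by (rule sum.cong) (use sc in \<open>auto simp: Bg_def\<close>)
  also have "\<dots> = k * m + (\<Sum>c\<in>L. if c \<in> Bg then 1 else 0)"
    unfolding k_def by (simp add: sum.distrib)
  also have "(\<Sum>c\<in>L. if c \<in> Bg then 1 else (0::nat)) = card Bg"
  proof -
    have "(\<Sum>c\<in>L. if c \<in> Bg then 1 else (0::nat)) = (\<Sum>c\<in>{c\<in>L. c \<in> Bg}. 1)"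
      using sum.inter_filter[OF fL, of "\<lambda>_. 1::nat" "\<lambda>c. c \<in> Bg"] by simp
    also have "{c\<in>L. c \<in> Bg} = Bg" using BgL by auto
    finally show ?thesis by simp
  qed
  finally have nkm: "n = k * m + lb" using nsum unfolding lb_def by simp
  have ndiv: "n div k = m" and nmod: "n mod k = lb" using nkm lbk k0 by auto
  obtain \<phi>1 where b1: "bij_betw \<phi>1 Bg {0..<lb}"
    using finite_same_card_bij[OF fBg, of "{0..<lb}"] unfolding lb_def by auto
  have cSm: "card (L - Bg) = card {lb..<k}" using BgL fBg unfolding k_def lb_def by (simp add: card_Diff_subset)
  obtain \<phi>2 where b2: "bij_betw \<phi>2 (L - Bg) {lb..<k}"
    using finite_same_card_bij[of "L - Bg" "{lb..<k}"] fL cSm by auto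
  define \<phi> where "\<phi> = (\<lambda>c. if c \<in> Bg then \<phi>1 c else \<phi>2 c)"
  have b1': "bij_betw \<phi> Bg {0..<lb}" using b1 unfolding \<phi>_def by (rule bij_betw_cong[THEN iffD1, rotated]) auto
  have b2': "bij_betw \<phi> (L - Bg) {lb..<k}" using b2 unfolding \<phi>_def by (rule bij_betw_cong[THEN iffD1, rotated]) auto
  have "bij_betw \<phi> (Bg \<union> (L - Bg)) ({0..<lb} \<union> {lb..<k})" by (rule bij_betw_combine[OF b1' b2']) auto
  moreover have "Bg \<union> (L - Bg) = L" using BgL by auto
  moreover have "{0..<lb} \<union> {lb..<k} = {0..<k}" using lbk by auto
  ultimately have bphi: "bij_betw \<phi> L {0..<k}" by simp
  have qimg: "(\<lambda>y. y mod k) ` {0..<n} = {0..<k}"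
  proof
    show "(\<lambda>y. y mod k) ` {0..<n} \<subseteq> {0..<k}" using k0 by auto
    show "{0..<k} \<subseteq> (\<lambda>y. y mod k) ` {0..<n}"
    proof
      fix c assume c: "c \<in> {0..<k}"
      then have "c < n" "c mod k = c" using kn by auto
      then show "c \<in> (\<lambda>y. y mod k) ` {0..<n}" by force
    qed
  qed
  have cs: "\<forall>c\<in>p ` V. card {x\<in>V. p x = c} = card {y\<in>{0..<n}. y mod k = \<phi> c}"
  proof
    fix c assume c: "c \<in> p ` V"
    then have cL: "c \<in> L" unfolding L_def .
    have pc: "\<phi> c < k" using bphi cL by (auto dest: bij_betwE)
    have tc: "card {y\<in>{0..<n}. y mod k = \<phi> c} = m + (if \<phi> c < lb then 1 else 0)"
      using turan_class[OF k0 pc, of n] ndiv nmod by simp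
    show "card {x\<in>V. p x = c} = card {y\<in>{0..<n}. y mod k = \<phi> c}"
    proof (cases "c \<in> Bg")
      case True
      then have "\<phi> c < lb" using b1' by (auto dest: bij_betwE)
      moreover have "s c = m + 1" using True unfolding Bg_def by simp
      ultimately show ?thesis using tc unfolding s_def by simp
    next
      case False
      then have "\<phi> c \<ge> lb" using b2' cL by (auto dest: bij_betwE)
      moreover have "s c = m" using False sc[OF cL] unfolding Bg_def using cL by auto
      ultimately show ?thesis using tc unfolding s_def by simp
    qed
  qed
  have bphi': "bij_betw \<phi> (p ` V) ((\<lambda>y. y mod k) ` {0..<n})" using bphi qimg unfolding L_def by simp
  obtain f where bf: "bij_betw f V {0..<n}" and qf: "\<forall>x\<in>V. f x mod k = \<phi> (p x)"
    using label_iso[OF fV _ bphi' cs] by auto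
  have inj_phi: "inj_on \<phi> L" using bphi by (simp add: bij_betw_def)
  have "\<forall>x\<in>V. \<forall>y\<in>V. E x y \<longleftrightarrow> turan_E k n (f x) (f y)"
  proof (intro ballI)
    fix x y assume x: "x \<in> V" and y: "y \<in> V"
    have fx: "f x < n" "f y < n" using bf x y by (auto dest: bij_betwE)
    have "E x y \<longleftrightarrow> p x \<noteq> p y" using mp x y by blast
    also have "\<dots> \<longleftrightarrow> \<phi> (p x) \<noteq> \<phi> (p y)" using inj_phi x y unfolding L_def by (auto dest: inj_onD)
    also have "\<dots> \<longleftrightarrow> turan_E k n (f x) (f y)" using qf x y fx unfolding turan_E_def by auto
    finally show "E x y \<longleftrightarrow> turan_E k n (f x) (f y)" .
  qed
  then show ?thesis using bf unfolding graph_iso_def k_def L_def by blast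
qed

lemma part1:
  fixes r t n :: nat and V :: "'a set"
  assumes r2: "r \<ge> 2" and t2: "t \<ge> 2" and n: "n \<ge> r * t"
    and sg: "simple_graph V E" and cV: "card V = n" and cm: "complete_multipartite V E"
    and eq: "ind_count (Kpart_V r t) (Kpart_E r t) V E = ind_max (Kpart_V r t) (Kpart_E r t) n"
  shows "\<exists>k\<ge>r. graph_iso V E {0..<n} (turan_E k n)"
proof -
  have t: "t \<ge> 1" using t2 by simp
  have fV: "finite V" using sg unfolding simple_graph_def by blast
  obtain p :: "'a \<Rightarrow> nat" where mp: "\<forall>x\<in>V. \<forall>y\<in>V. E x y \<longleftrightarrow> p x \<noteq> p y"
    using cm unfolding complete_multipartite_def by blast
  have maxp: "\<And>q. cntp q t r V \<le> cntp p t r V" using cntp_max_mp[OF t sg cV mp eq] .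
  have pos: "cntp p t r V > 0"
  proof -
    have "cntp (\<lambda>x. x mod r) t r {0..<n} > 0" using turan_pos[OF r2 t n] .
    also have "cntp (\<lambda>x. x mod r) t r {0..<n} = ind_count (Kpart_V r t) (Kpart_E r t) {0..<n} (turan_E r n)"
      using ind_count_cntp[OF t _ turan_mp] by simp
    also have "\<dots> \<le> ind_max (Kpart_V r t) (Kpart_E r t) n" using ind_max_ge[OF turan_simple] .
    also have "\<dots> = cntp p t r V" using eq ind_count_cntp[OF t fV mp] by simp
    finally show ?thesis .
  qed
  define L where "L = p ` V"
  define s where "s = (\<lambda>c. card {x\<in>V. p x = c})"
  have fL: "finite L" unfolding L_def using fV by simp
  obtain S where SV: "S \<subseteq> V" and gS: "goodp p t r S"
    using pos unfolding cntp_def by (metis (no_types, lifting) card.empty empty_Collect_eq less_irrefl)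
  have cS: "card (p ` S) = r" and clS: "\<forall>c\<in>p ` S. card {x\<in>S. p x = c} = t"
    using gS unfolding goodp_def by blast+
  obtain c0 where c0: "c0 \<in> p ` S" using cS r2 by fastforce
  have c0L: "c0 \<in> L" using c0 SV unfolding L_def by auto
  have sc0: "s c0 \<ge> t"
  proof -
    have "card {x\<in>S. p x = c0} \<le> s c0" unfolding s_def by (rule card_mono) (use fV SV in auto)
    then show ?thesis using clS c0 by simp
  qed
  have Lne: "L \<noteq> {}" using c0L by auto
  define M where "M = Max (s ` L)"
  define m where "m = Min (s ` L)"
  have "M \<in> s ` L" unfolding M_def using fL Lne by simp
  then obtain cmax where cmax: "cmax \<in> L" "s cmax = M" by auto
  have "m \<in> s ` L" unfolding m_def using fL Lne by simp
  then obtain cmin where cmin: "cmin \<in> L" "s cmin = m" by auto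
  have leM: "\<And>c. c \<in> L \<Longrightarrow> s c \<le> M" unfolding M_def using fL by simp
  have gem: "\<And>c. c \<in> L \<Longrightarrow> m \<le> s c" unfolding m_def using fL by simp
  have Mm: "M \<le> m + 1"
  proof (rule ccontr)
    assume "\<not> M \<le> m + 1"
    then have big: "card {x\<in>V. p x = cmax} \<ge> card {x\<in>V. p x = cmin} + 2" using cmax cmin unfolding s_def by simp
    have at: "card {x\<in>V. p x = cmax} \<ge> t" using sc0 leM[OF c0L] cmax unfolding s_def by simp
    show False using balanced_contra[OF t2 r2 fV maxp pos _ _ big at] cmax cmin unfolding L_def by blast
  qed
  have bal: "\<forall>c1\<in>p ` V. \<forall>c2\<in>p ` V. card {x\<in>V. p x = c1} \<le> card {x\<in>V. p x = c2} + 1"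
    using leM gem Mm unfolding L_def s_def by fastforce
  have kr: "card (p ` V) \<ge> r"
  proof -
    have "p ` S \<subseteq> p ` V" using SV by auto
    then have "card (p ` S) \<le> card (p ` V)" using fV by (simp add: card_mono)
    then show ?thesis using cS by simp
  qed
  have Vne: "V \<noteq> {}" using c0L unfolding L_def by auto
  have "graph_iso V E {0..<n} (turan_E (card (p ` V)) n)" using balanced_iso[OF fV cV Vne mp bal] .
  then show ?thesis using kr by blast
qed

lemma twin_Kpart: "twinF (Kpart_V r t) (Kpart_E r t)"
  unfolding twinF_def Kpart_E_def by auto

theorem theorem5p3:
  fixes r t n :: nat
  assumes "r \<ge> 2" and "t \<ge> 2" and "n \<ge> r * t"
  shows "(\<forall>(V :: 'a set) E. simple_graph V E \<and> card V = n \<and> complete_multipartite V E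
            \<and> ind_count (Kpart_V r t) (Kpart_E r t) V E = ind_max (Kpart_V r t) (Kpart_E r t) n
          \<longrightarrow> (\<exists>k\<ge>r. graph_iso V E {0..<n} (turan_E k n)))
       \<and> (\<exists>k. ind_count (Kpart_V r t) (Kpart_E r t) {0..<n} (turan_E k n)
              = ind_max (Kpart_V r t) (Kpart_E r t) n)"
proof (intro conjI allI impI)
  fix V :: "'a set" and E
  assume "simple_graph V E \<and> card V = n \<and> complete_multipartite V E
            \<and> ind_count (Kpart_V r t) (Kpart_E r t) V E = ind_max (Kpart_V r t) (Kpart_E r t) n"
  then show "\<exists>k\<ge>r. graph_iso V E {0..<n} (turan_E k n)" using part1[OF assms] by blast
next
  obtain E0 where E0: "simple_graph {0..<n} E0"
    "ind_count (Kpart_V r t) (Kpart_E r t) {0..<n} E0 = ind_max (Kpart_V r t) (Kpart_E r t) n"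
    using ind_max_attained by blast
  have mx: "maxg (Kpart_V r t) (Kpart_E r t) {0..<n} E0"
    unfolding maxg_def using E0 ind_max_ge by metis
  obtain E' where E': "maxg (Kpart_V r t) (Kpart_E r t) {0..<n} E'" "complete_multipartite {0..<n} E'"
    using sym_exists[OF twin_Kpart mx] by blast
  have sE': "simple_graph {0..<n} E'" using E' unfolding maxg_def by blast
  have "ind_count (Kpart_V r t) (Kpart_E r t) {0..<n} E0 \<le> ind_count (Kpart_V r t) (Kpart_E r t) {0..<n} E'"
    using E'(1) E0(1) unfolding maxg_def by blast
  moreover have "ind_count (Kpart_V r t) (Kpart_E r t) {0..<n} E' \<le> ind_max (Kpart_V r t) (Kpart_E r t) n"
    using ind_max_ge[OF sE'] .
  ultimately have eqE': "ind_count (Kpart_V r t) (Kpart_E r t) {0..<n} E' = ind_max (Kpart_V r t) (Kpart_E r t) n"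
    using E0(2) by simp
  obtain k where "graph_iso {0..<n} E' {0..<n} (turan_E k n)"
    using part1[OF assms sE' _ E'(2) eqE'] by auto
  then have "ind_count (Kpart_V r t) (Kpart_E r t) {0..<n} (turan_E k n) = ind_max (Kpart_V r t) (Kpart_E r t) n"
    using ind_count_iso eqE' by metis
  then show "\<exists>k. ind_count (Kpart_V r t) (Kpart_E r t) {0..<n} (turan_E k n) = ind_max (Kpart_V r t) (Kpart_E r t) n"
    by blast
qed

end
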